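(* Let $A^!=T(A_1^* )/(R^\perp)$ be the quadratic dual of $A=A_k$, where $R=\operatorname{span}(r_1,\dots,r_7)\subset A_1\otimes A_1$. Identify $A^!_1=A_1^*$ with $\operatorname{Im}\mathbb{O}_k$ by letting the basis of $A_1^*$ dual to $x_1,\dots,x_7$ correspond to $o_1,\dots,o_7$. Then there are identifications $A^!_2=\operatorname{Im}\mathbb{O}_k$ and $A^!_3=k$ such that (1) the multiplication $A^!_1\times A^!_1\to A^!_2$ is $(u,v)\mapsto \operatorname{Im}(uv)$; (2) the multiplication $A^!_1\times A^!_1\times A^!_1\to A^!_3$ is $(u,v,w)\mapsto -\operatorname{Re}(uvw)$; and (3) $(A^!)^*\cong A^!$ as $A^!$-bimodules, i.e. $A^!$ is a symmetric Frobenius algebra.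
   Context: Let $k$ be a field of characteristic $\ne 2$. Label the points of the Fano plane by $1,\dots,7$ so that its directed lines are $123,145,167,246,275,374,365$. For $i,j,l$ put $\varepsilon^{ijl}=1$ if $(i,j,l)$ is a cyclic rotation of a directed line, $-1$ if $(j,i,l)$ is, and $0$ otherwise. $A_k=k\langle x_1,\dots,x_7\rangle/(r_1,\dots,r_7)$ with $\deg x_i=1$ and $r_i=\sum_{m,n}\varepsilon^{imn}x_mx_n$. The octonion algebra $\mathbb{O}_k$ is the unital non-associative $k$-algebra with basis $1,o_1,\dots,o_7$ and $o_ro_s=\sum_{i}\varepsilon^{rsi}o_i-\delta_{rs}$; $\operatorname{Im}\mathbb{O}_k=\operatorname{span}(o_1,\dots,o_7)$; conjugation $u\mapsto\bar u$ is the linear map fixing $1$ and negating each $o_i$; $\operatorname{Re}(u)=\tfrac12(u+\bar u)\in k$, $\operatorname{Im}(u)=\tfrac12(u-\bar u)$. In $\mathbb{O}_k$, products of three imaginary octonions are associative in the sense that $\operatorname{Re}((uv)w)=\operatorname{Re}(u(vw))$, so $\operatorname{Re}(uvw)$ is unambiguous. A graded algebra is symmetric Frobenius if it is finite-dimensional and isomorphic to its linear dual as a bimodule. *)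

theory Defs
  imports Main
begin

definition fano_lines :: "(nat \<times> nat \<times> nat) list" where
  "fano_lines = [(1,2,3),(1,4,5),(1,6,7),(2,4,6),(2,7,5),(3,7,4),(3,6,5)]"

definition directed :: "nat \<Rightarrow> nat \<Rightarrow> nat \<Rightarrow> bool" where
  "directed i j l \<longleftrightarrow> (i,j,l) \<in> set fano_lines \<or> (j,l,i) \<in> set fano_lines \<or> (l,i,j) \<in> set fano_lines"

definition eps :: "nat \<Rightarrow> nat \<Rightarrow> nat \<Rightarrow> int" where
  "eps i j l = (if directed i j l then 1 else if directed j i l then -1 else 0)"

definition vadd :: "('b \<Rightarrow> 'k::field) \<Rightarrow> ('b \<Rightarrow> 'k) \<Rightarrow> 'b \<Rightarrow> 'k" where
  "vadd f g = (\<lambda>w. f w + g w)"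

definition vsc :: "'k::field \<Rightarrow> ('b \<Rightarrow> 'k) \<Rightarrow> 'b \<Rightarrow> 'k" where
  "vsc c f = (\<lambda>w. c * f w)"

definition lin_on :: "('b \<Rightarrow> 'k::field) set \<Rightarrow> (('b \<Rightarrow> 'k) \<Rightarrow> ('c \<Rightarrow> 'k)) \<Rightarrow> bool" where
  "lin_on S F \<longleftrightarrow> (\<forall>x\<in>S. \<forall>y\<in>S. F (vadd x y) = vadd (F x) (F y)) \<and>
                  (\<forall>c. \<forall>x\<in>S. F (vsc c x) = vsc c (F x))"

definition lin_on_scalar :: "('b \<Rightarrow> 'k::field) set \<Rightarrow> (('b \<Rightarrow> 'k) \<Rightarrow> 'k) \<Rightarrow> bool" where
  "lin_on_scalar S F \<longleftrightarrow> (\<forall>x\<in>S. \<forall>y\<in>S. F (vadd x y) = F x + F y) \<and>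
                  (\<forall>c. \<forall>x\<in>S. F (vsc c x) = c * F x)"

section \<open>Octonions: u :: nat => k, u 0 = real part, u i = coefficient of o_i (1 <= i <= 7)\<close>

definition octs :: "(nat \<Rightarrow> 'k::field) set" where
  "octs = {u. \<forall>i>7. u i = 0}"

definition im_octs :: "(nat \<Rightarrow> 'k::field) set" where
  "im_octs = {u \<in> octs. u 0 = 0}"

definition omult :: "(nat \<Rightarrow> 'k::field) \<Rightarrow> (nat \<Rightarrow> 'k) \<Rightarrow> nat \<Rightarrow> 'k" where
  "omult u v = (\<lambda>i. if i = 0 then u 0 * v 0 - (\<Sum>r=1..7. u r * v r)
                    else if i \<le> 7 then u 0 * v i + u i * v 0
                         + (\<Sum>r=1..7. \<Sum>s=1..7. of_int (eps r s i) * u r * v s)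
                    else 0)"

definition oconj :: "(nat \<Rightarrow> 'k::field) \<Rightarrow> nat \<Rightarrow> 'k" where
  "oconj u = (\<lambda>i. if i = 0 then u 0 else - u i)"

definition ore :: "(nat \<Rightarrow> 'k::field) \<Rightarrow> 'k" where
  "ore u = (vadd u (oconj u)) 0 / 2"

definition oim :: "(nat \<Rightarrow> 'k::field) \<Rightarrow> nat \<Rightarrow> 'k" where
  "oim u = vsc (1/2) (vadd u (vsc (-1) (oconj u)))"

text \<open>t w is the coefficient of xi_{w_1} (x) ... (x) xi_{w_n}, where xi_i is dual to x_i.\<close>

definition tens :: "(nat list \<Rightarrow> 'k::field) set" where
  "tens = {f. finite {w. f w \<noteq> 0} \<and> (\<forall>w. f w \<noteq> 0 \<longrightarrow> set w \<subseteq> {1..7})}"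

definition thom :: "nat \<Rightarrow> (nat list \<Rightarrow> 'k::field) set" where
  "thom n = {f \<in> tens. \<forall>w. f w \<noteq> 0 \<longrightarrow> length w = n}"

definition tmul :: "(nat list \<Rightarrow> 'k::field) \<Rightarrow> (nat list \<Rightarrow> 'k) \<Rightarrow> nat list \<Rightarrow> 'k" where
  "tmul f g = (\<lambda>w. \<Sum>i\<le>length w. f (take i w) * g (drop i w))"

text \<open>R^perp: elements of A_1^* (x) A_1^* annihilating R = span(r_1..r_7),
  with r_i = sum_{m,n} eps^{imn} x_m x_n.\<close>
definition Rperp :: "(nat list \<Rightarrow> 'k::field) set" where
  "Rperp = {s \<in> thom 2. \<forall>i\<in>{1..7}.
             (\<Sum>m=1..7. \<Sum>n=1..7. of_int (eps i m n) * s [m, n]) = 0}"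

inductive_set dual_ideal :: "(nat list \<Rightarrow> 'k::field) set" where
  zero: "(\<lambda>_. 0) \<in> dual_ideal"
| gen: "a \<in> tens \<Longrightarrow> s \<in> Rperp \<Longrightarrow> b \<in> tens \<Longrightarrow> tmul (tmul a s) b \<in> dual_ideal"
| add: "x \<in> dual_ideal \<Longrightarrow> y \<in> dual_ideal \<Longrightarrow> vadd x y \<in> dual_ideal"
| scale: "x \<in> dual_ideal \<Longrightarrow> vsc c x \<in> dual_ideal"

text \<open>Identification A^!_1 = A_1^* with Im O: xi_i corresponds to o_i.\<close>
definition to_oct :: "(nat list \<Rightarrow> 'k::field) \<Rightarrow> nat \<Rightarrow> 'k" where
  "to_oct u = (\<lambda>i. if 1 \<le> i \<and> i \<le> 7 then u [i] else 0)"

text \<open>(A^!)^*: linear functionals on T vanishing on I (normalised to 0 outside T).\<close>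
definition dual_space :: "((nat list \<Rightarrow> 'k::field) \<Rightarrow> 'k) set" where
  "dual_space = {f. lin_on_scalar tens f \<and> (\<forall>x\<in>dual_ideal. f x = 0) \<and> (\<forall>x. x \<notin> tens \<longrightarrow> f x = 0)}"

definition dual_act :: "(nat list \<Rightarrow> 'k::field) \<Rightarrow> ((nat list \<Rightarrow> 'k) \<Rightarrow> 'k) \<Rightarrow> (nat list \<Rightarrow> 'k)
                        \<Rightarrow> (nat list \<Rightarrow> 'k) \<Rightarrow> 'k" where
  "dual_act a f b = (\<lambda>t. if t \<in> tens then f (tmul (tmul b t) a) else 0)"

definition symmetric_frobenius_dual :: "'k::field itself \<Rightarrow> bool" where
  "symmetric_frobenius_dual _ \<longleftrightarrow>
     (\<exists>B :: (nat list \<Rightarrow> 'k) set. finite B \<and> B \<subseteq> tens \<and>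
        (\<forall>x\<in>tens. \<exists>c. vadd x (vsc (-1) (\<lambda>w. \<Sum>b\<in>B. c b * b w)) \<in> dual_ideal)) \<and>
     (\<exists>Phi :: (nat list \<Rightarrow> 'k) \<Rightarrow> ((nat list \<Rightarrow> 'k) \<Rightarrow> 'k).
        lin_on tens Phi \<and> Phi ` tens = dual_space \<and>
        (\<forall>x\<in>tens. Phi x = (\<lambda>_. 0) \<longleftrightarrow> x \<in> dual_ideal) \<and>
        (\<forall>a\<in>tens. \<forall>x\<in>tens. \<forall>b\<in>tens. Phi (tmul (tmul a x) b) = dual_act a (Phi x) b))"

end

theory Submission
  imports Defs
begin


definition word :: "nat list \<Rightarrow> nat list \<Rightarrow> 'k::field" where
  "word u = (\<lambda>v. if v = u then 1 else 0)"

definition shft :: "(nat list \<Rightarrow> 'k::field) \<Rightarrow> nat \<Rightarrow> nat list \<Rightarrow> 'k" where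
  "shft f x = (\<lambda>u. f (x # u))"

lemma tmul_Nil: "tmul f g [] = f [] * g []"
  by (simp add: tmul_def)

lemma tmul_Cons: "tmul f g (x # w) = f [] * g (x # w) + tmul (shft f x) g w"
  unfolding tmul_def shft_def
  by (simp add: sum.atMost_Suc_shift del: sum.atMost_Suc)

lemma tmul_vadd1: "tmul (vadd f f') g = vadd (tmul f g) (tmul f' g)"
  by (simp add: tmul_def vadd_def sum.distrib distrib_right fun_eq_iff)
lemma tmul_vadd2: "tmul f (vadd g g') = vadd (tmul f g) (tmul f g')"
  by (simp add: tmul_def vadd_def sum.distrib distrib_left fun_eq_iff)
lemma tmul_vsc1: "tmul (vsc c f) g = vsc c (tmul f g)"
  by (simp add: tmul_def vsc_def sum_distrib_left fun_eq_iff mult.assoc)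
lemma tmul_vsc2: "tmul f (vsc c g) = vsc c (tmul f g)"
  by (simp add: tmul_def vsc_def sum_distrib_left fun_eq_iff mult.left_commute)
lemma tmul_zero1: "tmul (\<lambda>_. 0) g = (\<lambda>_. 0)"
  by (simp add: tmul_def fun_eq_iff)
lemma tmul_zero2: "tmul f (\<lambda>_. 0) = (\<lambda>_. 0)"
  by (simp add: tmul_def fun_eq_iff)
lemma tmul_diff1: "tmul (\<lambda>v. f v - f' v) g = (\<lambda>v. tmul f g v - tmul f' g v)"
  by (simp add: tmul_def sum_subtractf left_diff_distrib fun_eq_iff)
lemma tmul_diff2: "tmul f (\<lambda>v. g v - g' v) = (\<lambda>v. tmul f g v - tmul f g' v)"
  by (simp add: tmul_def sum_subtractf right_diff_distrib fun_eq_iff)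

lemma shft_tmul: "shft (tmul f g) x = vadd (vsc (f []) (shft g x)) (tmul (shft f x) g)"
  by (simp add: fun_eq_iff shft_def vadd_def vsc_def tmul_Cons)

lemma tmul_assoc_pt: "tmul (tmul f g) h w = tmul f (tmul g h) w"
proof (induction w arbitrary: f)
  case Nil
  then show ?case by (simp add: tmul_Nil)
next
  case (Cons x w)
  have "tmul (tmul f g) h (x # w) = f [] * g [] * h (x # w) + tmul (shft (tmul f g) x) h w"
    by (simp add: tmul_Cons tmul_Nil)
  also have "\<dots> = f [] * g [] * h (x # w) + f [] * tmul (shft g x) h w + tmul (tmul (shft f x) g) h w"
    by (simp only: shft_tmul tmul_vadd1 tmul_vsc1) (simp add: vadd_def vsc_def)
  also have "\<dots> = tmul f (tmul g h) (x # w)"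
    by (simp add: tmul_Cons tmul_Nil Cons.IH distrib_left mult.assoc)
  finally show ?case .
qed

lemma tmul_assoc: "tmul (tmul f g) h = tmul f (tmul g h)"
  using tmul_assoc_pt by blast

lemma tmul_one2: "tmul f (word []) = f"
proof -
  have "tmul f (word []) w = f w" for w
    by (induction w arbitrary: f) (simp_all add: tmul_Nil tmul_Cons word_def shft_def)
  then show ?thesis by blast
qed

lemma shft_word_Nil: "shft (word []) x = (\<lambda>_. 0)"
  by (simp add: shft_def word_def fun_eq_iff)

lemma tmul_one1: "tmul (word []) g = g"
proof -
  have "tmul (word []) g w = g w" for w
    by (cases w) (simp_all add: tmul_Nil tmul_Cons shft_word_Nil tmul_zero1, simp_all add: word_def)
  then show ?thesis by blast
qed

lemma shft_word_Cons: "shft (word (y # u)) x = (if x = y then word u else (\<lambda>_. 0))"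
  by (auto simp add: shft_def word_def fun_eq_iff)

lemma tmul_word: "tmul (word u) (word v) = (word (u @ v) :: nat list \<Rightarrow> 'k::field)"
proof (induction u)
  case Nil
  then show ?case by (simp add: tmul_one1)
next
  case (Cons y u)
  note IH = Cons.IH
  have "tmul (word (y # u)) (word v) w = (word (y # u @ v) w :: 'k)" for w
  proof (cases w)
    case Nil
    then show ?thesis by (simp add: tmul_Nil word_def)
  next
    case (Cons x w')
    have "tmul (word (y # u)) (word v) w = (word (y # u) [] * word v w + tmul (shft (word (y # u)) x) (word v) w' :: 'k)"
      using Cons by (simp add: tmul_Cons)
    also have "\<dots> = (if x = y then word (u @ v) w' else 0)"
      unfolding shft_word_Cons by (cases "x = y") (simp_all add: IH tmul_zero1 word_def[of "y#u"])
    also have "\<dots> = word (y # u @ v) w"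
      using Cons by (simp add: word_def)
    finally show ?thesis .
  qed
  then show ?case by auto
qed



lemma tmul_nz: "tmul f g w \<noteq> 0 \<Longrightarrow> \<exists>i. f (take i w) \<noteq> 0 \<and> g (drop i w) \<noteq> 0"
proof (rule ccontr)
  assume "tmul f g w \<noteq> 0" "\<not> (\<exists>i. f (take i w) \<noteq> 0 \<and> g (drop i w) \<noteq> 0)"
  then have "\<forall>i. f (take i w) * g (drop i w) = 0" by auto
  then have "tmul f g w = 0" unfolding tmul_def by (intro sum.neutral) blast
  then show False using \<open>tmul f g w \<noteq> 0\<close> by simp
qed

lemma tmul_tens: assumes "f \<in> tens" "g \<in> tens" shows "tmul f g \<in> tens"
proof -
  let ?Sf = "{w. f w \<noteq> 0}" and ?Sg = "{w. g w \<noteq> 0}"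
  have "{w. tmul f g w \<noteq> 0} \<subseteq> (\<lambda>(u,v). u @ v) ` (?Sf \<times> ?Sg)"
  proof
    fix w assume "w \<in> {w. tmul f g w \<noteq> 0}"
    then obtain i where "f (take i w) \<noteq> 0" "g (drop i w) \<noteq> 0" using tmul_nz by blast
    then show "w \<in> (\<lambda>(u,v). u @ v) ` (?Sf \<times> ?Sg)"
      by (intro image_eqI[of _ _ "(take i w, drop i w)"]) auto
  qed
  moreover have "finite ((\<lambda>(u,v). u @ v) ` (?Sf \<times> ?Sg))"
    using assms by (auto simp: tens_def)
  ultimately have fin: "finite {w. tmul f g w \<noteq> 0}" by (rule finite_subset)
  have "set w \<subseteq> {1..7}" if "tmul f g w \<noteq> 0" for w
  proof -
    obtain i where "f (take i w) \<noteq> 0" "g (drop i w) \<noteq> 0" using tmul_nz \<open>tmul f g w \<noteq> 0\<close> by blast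
    then have "set (take i w) \<subseteq> {1..7}" "set (drop i w) \<subseteq> {1..7}" using assms by (auto simp: tens_def)
    then show ?thesis by (metis append_take_drop_id set_append Un_subset_iff)
  qed
  with fin show ?thesis by (auto simp: tens_def)
qed

lemma zero_tens: "(\<lambda>_. 0) \<in> tens" by (simp add: tens_def)

lemma vadd_tens: "f \<in> tens \<Longrightarrow> g \<in> tens \<Longrightarrow> vadd f g \<in> tens"
proof -
  assume a: "f \<in> tens" "g \<in> tens"
  have "{w. vadd f g w \<noteq> 0} \<subseteq> {w. f w \<noteq> 0} \<union> {w. g w \<noteq> 0}" by (auto simp: vadd_def)
  moreover have "finite ({w. f w \<noteq> 0} \<union> {w. g w \<noteq> 0})" using a by (simp add: tens_def)
  ultimately have "finite {w. vadd f g w \<noteq> 0}" by (rule finite_subset)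
  moreover have "set w \<subseteq> {1..7}" if "vadd f g w \<noteq> 0" for w
  proof -
    have "f w \<noteq> 0 \<or> g w \<noteq> 0" using that by (auto simp: vadd_def)
    then show ?thesis using a by (auto simp: tens_def)
  qed
  ultimately show ?thesis unfolding tens_def by blast
qed

lemma vsc_tens: "f \<in> tens \<Longrightarrow> vsc c f \<in> tens"
proof -
  assume a: "f \<in> tens"
  have "{w. vsc c f w \<noteq> 0} \<subseteq> {w. f w \<noteq> 0}" by (auto simp: vsc_def)
  then have "finite {w. vsc c f w \<noteq> 0}" using a by (auto simp: tens_def intro: finite_subset)
  then show ?thesis using a unfolding tens_def vsc_def by auto
qed

lemma word_tens: "set u \<subseteq> {1..7} \<Longrightarrow> word u \<in> tens"
proof -
  assume "set u \<subseteq> {1..7}"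
  moreover have "{w. word u w \<noteq> (0::'a::field)} = {u}" by (auto simp: word_def)
  ultimately show "word u \<in> (tens :: (nat list \<Rightarrow> 'a) set)" by (simp add: tens_def word_def)
qed

lemma ideal_tens: "x \<in> dual_ideal \<Longrightarrow> x \<in> tens"
proof (induction rule: dual_ideal.induct)
  case zero then show ?case by (rule zero_tens)
next
  case (gen a s b)
  then show ?case by (intro tmul_tens) (auto simp: Rperp_def thom_def)
next
  case (add x y) then show ?case by (simp add: vadd_tens)
next
  case (scale x c) then show ?case by (simp add: vsc_tens)
qed

lemma ideal_lmul: "x \<in> dual_ideal \<Longrightarrow> a \<in> tens \<Longrightarrow> tmul a x \<in> dual_ideal"
proof (induction rule: dual_ideal.induct)
  case zero then show ?case by (simp add: tmul_zero2 dual_ideal.zero)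
next
  case (gen a' s b)
  then show ?case unfolding tmul_assoc[symmetric]
    by (intro dual_ideal.gen tmul_tens) auto
next
  case (add x y) then show ?case by (simp add: tmul_vadd2 dual_ideal.add)
next
  case (scale x c) then show ?case by (simp add: tmul_vsc2 dual_ideal.scale)
qed

lemma ideal_rmul: "x \<in> dual_ideal \<Longrightarrow> b \<in> tens \<Longrightarrow> tmul x b \<in> dual_ideal"
proof (induction rule: dual_ideal.induct)
  case zero then show ?case by (simp add: tmul_zero1 dual_ideal.zero)
next
  case (gen a s b')
  then show ?case unfolding tmul_assoc[of "tmul a s" b' b]
    by (intro dual_ideal.gen tmul_tens) auto
next
  case (add x y) then show ?case by (simp add: tmul_vadd1 dual_ideal.add)
next
  case (scale x c) then show ?case by (simp add: tmul_vsc1 dual_ideal.scale)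
qed

lemma one_tens: "word [] \<in> tens" by (rule word_tens) simp

lemma Rperp_ideal: "s \<in> Rperp \<Longrightarrow> s \<in> dual_ideal"
  using dual_ideal.gen[OF one_tens _ one_tens, of s] by (simp add: tmul_one1 tmul_one2)

lemma ideal_sum: "finite S \<Longrightarrow> (\<And>k. k \<in> S \<Longrightarrow> F k \<in> dual_ideal) \<Longrightarrow> (\<lambda>v. \<Sum>k\<in>S. F k v) \<in> dual_ideal"
proof (induction S rule: finite_induct)
  case empty then show ?case by (simp add: dual_ideal.zero)
next
  case (insert k S)
  then have "vadd (F k) (\<lambda>v. \<Sum>k\<in>S. F k v) \<in> dual_ideal" by (intro dual_ideal.add) auto
  then show ?case using insert by (simp add: vadd_def)
qed

definition Rel :: "(nat list \<Rightarrow> 'k::field) \<Rightarrow> (nat list \<Rightarrow> 'k) \<Rightarrow> bool" where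
  "Rel x y \<longleftrightarrow> (\<lambda>v. x v - y v) \<in> dual_ideal"

lemma Rel_refl: "Rel x x"
  by (simp add: Rel_def dual_ideal.zero)

lemma Rel_trans: "Rel x y \<Longrightarrow> Rel y z \<Longrightarrow> Rel x z"
  unfolding Rel_def using dual_ideal.add[of "\<lambda>v. x v - y v" "\<lambda>v. y v - z v"]
  by (simp add: vadd_def)

lemma Rel_vsc: "Rel x y \<Longrightarrow> Rel (vsc c x) (vsc c y)"
  unfolding Rel_def using dual_ideal.scale[of "\<lambda>v. x v - y v" c]
  by (simp add: vsc_def right_diff_distrib)

lemma Rel_sym: "Rel x y \<Longrightarrow> Rel y x"
  unfolding Rel_def using dual_ideal.scale[of "\<lambda>v. x v - y v" "-1"]
  by (simp add: vsc_def)

lemma Rel_vadd: "Rel x y \<Longrightarrow> Rel x' y' \<Longrightarrow> Rel (vadd x x') (vadd y y')"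
  unfolding Rel_def using dual_ideal.add[of "\<lambda>v. x v - y v" "\<lambda>v. x' v - y' v"]
  by (simp add: vadd_def algebra_simps)

lemma Rel_lmul: "Rel x y \<Longrightarrow> a \<in> tens \<Longrightarrow> Rel (tmul a x) (tmul a y)"
  unfolding Rel_def using ideal_lmul by (fastforce simp: tmul_diff2)

lemma Rel_rmul: "Rel x y \<Longrightarrow> b \<in> tens \<Longrightarrow> Rel (tmul x b) (tmul y b)"
  unfolding Rel_def using ideal_rmul by (fastforce simp: tmul_diff1)

lemma Rel_ideal: "Rel x y \<Longrightarrow> y \<in> dual_ideal \<Longrightarrow> x \<in> dual_ideal"
  unfolding Rel_def using dual_ideal.add[of "\<lambda>v. x v - y v" y] by (simp add: vadd_def)

lemma Rel_zero_iff: "Rel x (\<lambda>_. 0) \<longleftrightarrow> x \<in> dual_ideal"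
  by (simp add: Rel_def)



lemma directed_cyc: "directed i j l = directed j l i"
  unfolding directed_def by blast

lemma not_both: "directed i j l \<Longrightarrow> \<not> directed j i l"
  unfolding directed_def fano_lines_def set_simps insert_iff empty_iff prod.inject
  apply (elim disjE conjE)
  apply (simp_all)
  done

lemma eps_cyc: "eps i j l = eps j l i"
proof -
  have "directed i j l = directed j l i" "directed j i l = directed l j i"
    using directed_cyc by blast+
  then show ?thesis unfolding eps_def by simp
qed

lemma eps_anti: "eps j i l = - eps i j l"
  unfolding eps_def using not_both by auto

lemma eps_same: "eps i i l = 0"
  using eps_anti[of i i l] by simp

fun qw :: "nat \<Rightarrow> nat list" where
  "qw i = (if i = 1 then [2,3] else if i = 2 then [3,1] else if i = 3 then [1,2] else
           if i = 4 then [3,7] else if i = 5 then [1,4] else if i = 6 then [2,4] else [1,6])"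

definition qa :: "nat \<Rightarrow> nat" where "qa i = hd (qw i)"
definition qb :: "nat \<Rightarrow> nat" where "qb i = hd (tl (qw i))"

lemma qw_eq: "qw i = [qa i, qb i]"
  by (simp add: qa_def qb_def)

lemma qab_range: "qa i \<in> {1..7}" "qb i \<in> {1..7}"
  by (simp_all add: qa_def qb_def)

lemma set7: "{1..7::nat} = {1,2,3,4,5,6,7}" by auto

lemmas eps_simps = eps_def directed_def fano_lines_def

lemma eps_q: "i \<in> {1..7} \<Longrightarrow> j \<in> {1..7} \<Longrightarrow> eps j (qa i) (qb i) = (if i = j then 1 else 0)"
  unfolding set7 by (elim insertE emptyE) (simp_all add: qa_def qb_def eps_simps)



definition phi2 :: "(nat list \<Rightarrow> 'k::field) \<Rightarrow> nat \<Rightarrow> 'k" where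
  "phi2 x = (\<lambda>i. if 1 \<le> i \<and> i \<le> 7 then (\<Sum>r=1..7. \<Sum>s=1..7. of_int (eps r s i) * x [r,s]) else 0)"

definition omega :: "nat list \<Rightarrow> 'k::field" where "omega = word [1,2,3]"

lemma thom_zero: "(\<lambda>_. 0) \<in> thom n" by (simp add: thom_def zero_tens)
lemma thom_vadd: assumes "x \<in> thom n" "y \<in> thom n" shows "vadd x y \<in> thom n"
proof -
  have "vadd x y \<in> tens" using assms by (intro vadd_tens) (auto simp: thom_def)
  moreover have "length w = n" if "vadd x y w \<noteq> 0" for w
  proof -
    have "x w \<noteq> 0 \<or> y w \<noteq> 0" using that by (auto simp: vadd_def)
    then show ?thesis using assms by (auto simp: thom_def)
  qed
  ultimately show ?thesis by (simp add: thom_def)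
qed
lemma thom_vsc: assumes "x \<in> thom n" shows "vsc c x \<in> thom n"
proof -
  have "vsc c x \<in> tens" using assms by (intro vsc_tens) (auto simp: thom_def)
  moreover have "length w = n" if "vsc c x w \<noteq> 0" for w
  proof -
    have "x w \<noteq> 0" using that by (auto simp: vsc_def)
    then show ?thesis using assms by (auto simp: thom_def)
  qed
  ultimately show ?thesis by (simp add: thom_def)
qed
lemma thom_diff: "x \<in> thom n \<Longrightarrow> y \<in> thom n \<Longrightarrow> (\<lambda>w. x w - y w) \<in> thom n"
  using thom_vadd[of x n "vsc (-1) y"] thom_vsc[of y n "-1"] by (simp add: vadd_def vsc_def)
lemma thom_word: "length u = n \<Longrightarrow> set u \<subseteq> {1..7} \<Longrightarrow> word u \<in> thom n"
proof -
  assume a: "length u = n" "set u \<subseteq> {1..7}"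
  then have "word u \<in> tens" by (rule_tac word_tens) simp
  then show ?thesis using a unfolding thom_def by (auto simp: word_def)
qed
lemma thom_sum: "finite S \<Longrightarrow> (\<And>k. k \<in> S \<Longrightarrow> F k \<in> thom n) \<Longrightarrow> (\<lambda>w. \<Sum>k\<in>S. F k w) \<in> thom n"
proof (induction S rule: finite_induct)
  case empty then show ?case by (simp add: thom_zero)
next
  case (insert k S)
  then have "vadd (F k) (\<lambda>v. \<Sum>k\<in>S. F k v) \<in> thom n" by (intro thom_vadd) auto
  then show ?case using insert by (simp add: vadd_def)
qed
lemma thom_tens: "x \<in> thom n \<Longrightarrow> x \<in> tens" by (simp add: thom_def)
lemma thom_len: "x \<in> thom n \<Longrightarrow> length w \<noteq> n \<Longrightarrow> x w = 0" by (auto simp: thom_def)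

lemma sum_delta_r: assumes "finite A"
  shows "(\<Sum>q\<in>A. f q * (if q = n then 1 else 0)) = (if n \<in> A then f n else (0::'a::comm_ring_1))"
proof -
  have "(\<Sum>q\<in>A. f q * (if q = n then 1 else 0)) = (\<Sum>q\<in>A. if q = n then f q else 0)"
    by (rule sum.cong) auto
  also have "\<dots> = (if n \<in> A then f n else 0)" using assms by (rule sum.delta)
  finally show ?thesis .
qed

lemma word2_eval: "word [m,n] [p,q] = (if p = m then 1 else 0) * (if q = n then (1::'a::field) else 0)"
  by (simp add: word_def)

lemma sum_word2: "m \<in> {1..7} \<Longrightarrow> n \<in> {1..7} \<Longrightarrow>
   (\<Sum>p=1..7. \<Sum>q=1..7. f p q * word [m,n] [p,q]) = (f m n :: 'a::field)"
proof -
  assume a: "m \<in> {1..7}" "n \<in> {1..7}"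
  have "(\<Sum>p=1..7. \<Sum>q=1..7. f p q * word [m,n] [p,q]) = (\<Sum>p=1..7. (\<Sum>q=1..7. (f p q * (if p = m then 1 else 0)) * (if q = n then 1 else 0)))"
    by (simp add: word2_eval mult.assoc)
  also have "\<dots> = (\<Sum>p=1..7. f p n * (if p = m then 1 else 0))"
    using a by (simp only: sum_delta_r finite_atLeastAtMost if_True)
  also have "\<dots> = f m n" using a by (simp only: sum_delta_r finite_atLeastAtMost if_True)
  finally show ?thesis .
qed

lemma Rperp_iff: "s \<in> Rperp \<longleftrightarrow> s \<in> thom 2 \<and> phi2 s = (\<lambda>_. 0)"
proof -
  have "(\<Sum>m=1..7. \<Sum>n=1..7. of_int (eps i m n) * s [m, n]) = (\<Sum>r=1..7. \<Sum>t=1..7. of_int (eps r t i) * s [r,t])" for i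
    using eps_cyc[of i] by simp
  then show ?thesis unfolding Rperp_def phi2_def fun_eq_iff by auto
qed

lemma RA: assumes "m \<in> {1..7}" "n \<in> {1..7}" "m' \<in> {1..7}" "n' \<in> {1..7}"
  and "\<forall>j\<in>{1..7}. eps j m n = e * eps j m' n'"
  shows "Rel (word [m,n]) (vsc (of_int e) (word [m',n']) :: nat list \<Rightarrow> 'k::field)"
proof -
  let ?s = "(\<lambda>v. word [m,n] v - vsc (of_int e) (word [m',n']) v) :: nat list \<Rightarrow> 'k"
  have t: "?s \<in> thom 2" using assms
    by (intro thom_diff thom_vsc thom_word) auto
  have "phi2 ?s j = 0" for j
  proof (cases "1 \<le> j \<and> j \<le> 7")
    case True
    have "phi2 ?s j = (\<Sum>r=1..7. \<Sum>t=1..7. of_int (eps r t j) * word [m,n] [r,t]) - of_int e * (\<Sum>r=1..7. \<Sum>t=1..7. of_int (eps r t j) * (word [m',n'] [r,t] :: 'k))"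
      using True by (simp add: phi2_def vsc_def right_diff_distrib sum_subtractf sum_distrib_left mult.left_commute)
    also have "\<dots> = of_int (eps m n j) - of_int e * of_int (eps m' n' j)"
      by (simp only: sum_word2[OF assms(1,2)] sum_word2[OF assms(3,4)])
    also have "\<dots> = 0"
    proof -
      have "eps m n j = e * eps m' n' j" using assms(5) True eps_cyc[of j m n] eps_cyc[of j m' n'] by auto
      then have "(of_int (eps m n j) :: 'k) = of_int (e * eps m' n' j)" by simp
      then show ?thesis by simp
    qed
    finally show ?thesis .
  qed (auto simp: phi2_def)
  then have "?s \<in> Rperp" using t by (simp add: Rperp_iff fun_eq_iff)
  then show ?thesis unfolding Rel_def by (rule Rperp_ideal)
qed

lemma word_vsc_tmul: "tmul (vsc c x) y = vsc c (tmul x y)" by (rule tmul_vsc1)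

lemma vsc_vsc: "vsc a (vsc b x) = vsc (a * b) x" by (simp add: vsc_def fun_eq_iff mult.assoc)

lemma stepR: assumes "Rel (word [m',n',c]) (vsc (of_int (eps m' n' c)) omega :: nat list \<Rightarrow> 'k::field)"
  and "\<forall>j\<in>{1..7}. eps j m n = e * eps j m' n'" and "eps m n c = e * eps m' n' c"
  and "m \<in> {1..7}" "n \<in> {1..7}" "m' \<in> {1..7}" "n' \<in> {1..7}" "c \<in> {1..7}"
  shows "Rel (word [m,n,c]) (vsc (of_int (eps m n c)) omega :: nat list \<Rightarrow> 'k::field)"
proof -
  have "Rel (tmul (word [m,n]) (word [c])) (tmul (vsc (of_int e) (word [m',n'])) (word [c]) :: nat list \<Rightarrow> 'k)"
    using RA[of m n m' n' e] assms by (intro Rel_rmul word_tens) auto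
  then have "Rel (word [m,n,c]) (vsc (of_int e) (word [m',n',c]) :: nat list \<Rightarrow> 'k)"
    by (simp add: tmul_vsc1 tmul_word)
  moreover have "Rel (vsc (of_int e) (word [m',n',c])) (vsc (of_int e) (vsc (of_int (eps m' n' c)) omega) :: nat list \<Rightarrow> 'k)"
    using assms(1) by (rule Rel_vsc)
  ultimately show ?thesis using assms(3) by (simp add: vsc_vsc Rel_trans)
qed

lemma stepL: assumes "Rel (word [c,m',n']) (vsc (of_int (eps c m' n')) omega :: nat list \<Rightarrow> 'k::field)"
  and "\<forall>j\<in>{1..7}. eps j m n = e * eps j m' n'" and "eps c m n = e * eps c m' n'"
  and "m \<in> {1..7}" "n \<in> {1..7}" "m' \<in> {1..7}" "n' \<in> {1..7}" "c \<in> {1..7}"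
  shows "Rel (word [c,m,n]) (vsc (of_int (eps c m n)) omega :: nat list \<Rightarrow> 'k::field)"
proof -
  have "Rel (tmul (word [c]) (word [m,n])) (tmul (word [c]) (vsc (of_int e) (word [m',n'])) :: nat list \<Rightarrow> 'k)"
    using RA[of m n m' n' e] assms by (intro Rel_lmul word_tens) auto
  then have "Rel (word [c,m,n]) (vsc (of_int e) (word [c,m',n']) :: nat list \<Rightarrow> 'k)"
    by (simp add: tmul_vsc2 tmul_word)
  moreover have "Rel (vsc (of_int e) (word [c,m',n'])) (vsc (of_int e) (vsc (of_int (eps c m' n')) omega) :: nat list \<Rightarrow> 'k)"
    using assms(1) by (rule Rel_vsc)
  ultimately show ?thesis using assms(3) by (simp add: vsc_vsc Rel_trans)
qed

lemma eps_same2: "eps j m m = 0" using eps_cyc[of j m m] eps_same by simp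
lemma eps_same3: "eps m j m = 0" using eps_cyc[of m j m] eps_same2 by simp

lemma zeroR: assumes "m \<in> {1..7}" "c \<in> {1..7}"
  shows "Rel (word [m,m,c]) (vsc (of_int (eps m m c)) omega :: nat list \<Rightarrow> 'k::field)"
proof -
  have "Rel (tmul (word [m,m]) (word [c])) (tmul (vsc (of_int 0) (word [m,m])) (word [c]) :: nat list \<Rightarrow> 'k)"
    using RA[of m m m m 0] assms by (intro Rel_rmul word_tens) (auto simp: eps_same eps_same2)
  then show ?thesis by (simp add: tmul_vsc1 tmul_word eps_same vsc_def tmul_zero1)
qed

lemma zeroL: assumes "m \<in> {1..7}" "c \<in> {1..7}"
  shows "Rel (word [c,m,m]) (vsc (of_int (eps c m m)) omega :: nat list \<Rightarrow> 'k::field)"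
proof -
  have "Rel (tmul (word [c]) (word [m,m])) (tmul (word [c]) (vsc (of_int 0) (word [m,m])) :: nat list \<Rightarrow> 'k)"
    using RA[of m m m m 0] assms by (intro Rel_lmul word_tens) (auto simp: eps_same eps_same2)
  then show ?thesis by (simp add: tmul_vsc2 tmul_word eps_same2 vsc_def tmul_zero2)
qed

lemma base123: "Rel (word [1,2,3]) (vsc (of_int (eps 1 2 3)) omega :: nat list \<Rightarrow> 'k::field)"
  by (simp add: eps_simps omega_def vsc_def Rel_refl)



lemma stepR7: assumes "Rel (word [m',n',c]) (vsc (of_int (eps m' n' c)) omega :: nat list \<Rightarrow> 'k::field)"
  and "\<forall>j\<in>{1,2,3,4,5,6,7}. eps j m n = e * eps j m' n'" and "eps m n c = e * eps m' n' c"
  and "m \<in> {1..7}" "n \<in> {1..7}" "m' \<in> {1..7}" "n' \<in> {1..7}" "c \<in> {1..7}"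
  shows "Rel (word [m,n,c]) (vsc (of_int (eps m n c)) omega :: nat list \<Rightarrow> 'k::field)"
  by (rule stepR[OF assms(1)]) (use assms in \<open>simp_all only: set7\<close>)

lemma stepL7: assumes "Rel (word [c,m',n']) (vsc (of_int (eps c m' n')) omega :: nat list \<Rightarrow> 'k::field)"
  and "\<forall>j\<in>{1,2,3,4,5,6,7}. eps j m n = e * eps j m' n'" and "eps c m n = e * eps c m' n'"
  and "m \<in> {1..7}" "n \<in> {1..7}" "m' \<in> {1..7}" "n' \<in> {1..7}" "c \<in> {1..7}"
  shows "Rel (word [c,m,n]) (vsc (of_int (eps c m n)) omega :: nat list \<Rightarrow> 'k::field)"
  by (rule stepL[OF assms(1)]) (use assms in \<open>simp_all only: set7\<close>)

lemma deg3_all: shows "\<forall>a\<in>{1..7}. \<forall>b\<in>{1..7}. \<forall>c\<in>{1..7}. Rel (word [a,b,c]) (vsc (of_int (eps a b c)) omega :: nat list \<Rightarrow> 'k::field)"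
proof -
  have f_1_2_3: "Rel (word [1,2,3]) (vsc (of_int (eps 1 2 3)) omega :: nat list \<Rightarrow> 'k)" by (rule base123)
  have f_1_1_1: "Rel (word [1,1,1]) (vsc (of_int (eps 1 1 1)) omega :: nat list \<Rightarrow> 'k)" by (rule zeroR) simp_all
  have f_1_1_2: "Rel (word [1,1,2]) (vsc (of_int (eps 1 1 2)) omega :: nat list \<Rightarrow> 'k)" by (rule zeroR) simp_all
  have f_1_1_3: "Rel (word [1,1,3]) (vsc (of_int (eps 1 1 3)) omega :: nat list \<Rightarrow> 'k)" by (rule zeroR) simp_all
  have f_1_1_4: "Rel (word [1,1,4]) (vsc (of_int (eps 1 1 4)) omega :: nat list \<Rightarrow> 'k)" by (rule zeroR) simp_all
  have f_1_1_5: "Rel (word [1,1,5]) (vsc (of_int (eps 1 1 5)) omega :: nat list \<Rightarrow> 'k)" by (rule zeroR) simp_all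
  have f_1_1_6: "Rel (word [1,1,6]) (vsc (of_int (eps 1 1 6)) omega :: nat list \<Rightarrow> 'k)" by (rule zeroR) simp_all
  have f_1_1_7: "Rel (word [1,1,7]) (vsc (of_int (eps 1 1 7)) omega :: nat list \<Rightarrow> 'k)" by (rule zeroR) simp_all
  have f_1_2_2: "Rel (word [1,2,2]) (vsc (of_int (eps 1 2 2)) omega :: nat list \<Rightarrow> 'k)" by (rule zeroL) simp_all
  have f_1_3_3: "Rel (word [1,3,3]) (vsc (of_int (eps 1 3 3)) omega :: nat list \<Rightarrow> 'k)" by (rule zeroL) simp_all
  have f_1_4_4: "Rel (word [1,4,4]) (vsc (of_int (eps 1 4 4)) omega :: nat list \<Rightarrow> 'k)" by (rule zeroL) simp_all
  have f_1_5_5: "Rel (word [1,5,5]) (vsc (of_int (eps 1 5 5)) omega :: nat list \<Rightarrow> 'k)" by (rule zeroL) simp_all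
  have f_1_6_6: "Rel (word [1,6,6]) (vsc (of_int (eps 1 6 6)) omega :: nat list \<Rightarrow> 'k)" by (rule zeroL) simp_all
  have f_1_7_7: "Rel (word [1,7,7]) (vsc (of_int (eps 1 7 7)) omega :: nat list \<Rightarrow> 'k)" by (rule zeroL) simp_all
  have f_2_1_1: "Rel (word [2,1,1]) (vsc (of_int (eps 2 1 1)) omega :: nat list \<Rightarrow> 'k)" by (rule zeroL) simp_all
  have f_2_2_1: "Rel (word [2,2,1]) (vsc (of_int (eps 2 2 1)) omega :: nat list \<Rightarrow> 'k)" by (rule zeroR) simp_all
  have f_2_2_2: "Rel (word [2,2,2]) (vsc (of_int (eps 2 2 2)) omega :: nat list \<Rightarrow> 'k)" by (rule zeroR) simp_all
  have f_2_2_3: "Rel (word [2,2,3]) (vsc (of_int (eps 2 2 3)) omega :: nat list \<Rightarrow> 'k)" by (rule zeroR) simp_all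
  have f_2_2_4: "Rel (word [2,2,4]) (vsc (of_int (eps 2 2 4)) omega :: nat list \<Rightarrow> 'k)" by (rule zeroR) simp_all
  have f_2_2_5: "Rel (word [2,2,5]) (vsc (of_int (eps 2 2 5)) omega :: nat list \<Rightarrow> 'k)" by (rule zeroR) simp_all
  have f_2_2_6: "Rel (word [2,2,6]) (vsc (of_int (eps 2 2 6)) omega :: nat list \<Rightarrow> 'k)" by (rule zeroR) simp_all
  have f_2_2_7: "Rel (word [2,2,7]) (vsc (of_int (eps 2 2 7)) omega :: nat list \<Rightarrow> 'k)" by (rule zeroR) simp_all
  have f_2_3_3: "Rel (word [2,3,3]) (vsc (of_int (eps 2 3 3)) omega :: nat list \<Rightarrow> 'k)" by (rule zeroL) simp_all
  have f_2_4_4: "Rel (word [2,4,4]) (vsc (of_int (eps 2 4 4)) omega :: nat list \<Rightarrow> 'k)" by (rule zeroL) simp_all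
  have f_2_5_5: "Rel (word [2,5,5]) (vsc (of_int (eps 2 5 5)) omega :: nat list \<Rightarrow> 'k)" by (rule zeroL) simp_all
  have f_2_6_6: "Rel (word [2,6,6]) (vsc (of_int (eps 2 6 6)) omega :: nat list \<Rightarrow> 'k)" by (rule zeroL) simp_all
  have f_2_7_7: "Rel (word [2,7,7]) (vsc (of_int (eps 2 7 7)) omega :: nat list \<Rightarrow> 'k)" by (rule zeroL) simp_all
  have f_3_1_1: "Rel (word [3,1,1]) (vsc (of_int (eps 3 1 1)) omega :: nat list \<Rightarrow> 'k)" by (rule zeroL) simp_all
  have f_3_2_2: "Rel (word [3,2,2]) (vsc (of_int (eps 3 2 2)) omega :: nat list \<Rightarrow> 'k)" by (rule zeroL) simp_all
  have f_3_3_1: "Rel (word [3,3,1]) (vsc (of_int (eps 3 3 1)) omega :: nat list \<Rightarrow> 'k)" by (rule zeroR) simp_all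
  have f_3_3_2: "Rel (word [3,3,2]) (vsc (of_int (eps 3 3 2)) omega :: nat list \<Rightarrow> 'k)" by (rule zeroR) simp_all
  have f_3_3_3: "Rel (word [3,3,3]) (vsc (of_int (eps 3 3 3)) omega :: nat list \<Rightarrow> 'k)" by (rule zeroR) simp_all
  have f_3_3_4: "Rel (word [3,3,4]) (vsc (of_int (eps 3 3 4)) omega :: nat list \<Rightarrow> 'k)" by (rule zeroR) simp_all
  have f_3_3_5: "Rel (word [3,3,5]) (vsc (of_int (eps 3 3 5)) omega :: nat list \<Rightarrow> 'k)" by (rule zeroR) simp_all
  have f_3_3_6: "Rel (word [3,3,6]) (vsc (of_int (eps 3 3 6)) omega :: nat list \<Rightarrow> 'k)" by (rule zeroR) simp_all
  have f_3_3_7: "Rel (word [3,3,7]) (vsc (of_int (eps 3 3 7)) omega :: nat list \<Rightarrow> 'k)" by (rule zeroR) simp_all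
  have f_3_4_4: "Rel (word [3,4,4]) (vsc (of_int (eps 3 4 4)) omega :: nat list \<Rightarrow> 'k)" by (rule zeroL) simp_all
  have f_3_5_5: "Rel (word [3,5,5]) (vsc (of_int (eps 3 5 5)) omega :: nat list \<Rightarrow> 'k)" by (rule zeroL) simp_all
  have f_3_6_6: "Rel (word [3,6,6]) (vsc (of_int (eps 3 6 6)) omega :: nat list \<Rightarrow> 'k)" by (rule zeroL) simp_all
  have f_3_7_7: "Rel (word [3,7,7]) (vsc (of_int (eps 3 7 7)) omega :: nat list \<Rightarrow> 'k)" by (rule zeroL) simp_all
  have f_4_1_1: "Rel (word [4,1,1]) (vsc (of_int (eps 4 1 1)) omega :: nat list \<Rightarrow> 'k)" by (rule zeroL) simp_all
  have f_4_2_2: "Rel (word [4,2,2]) (vsc (of_int (eps 4 2 2)) omega :: nat list \<Rightarrow> 'k)" by (rule zeroL) simp_all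
  have f_4_3_3: "Rel (word [4,3,3]) (vsc (of_int (eps 4 3 3)) omega :: nat list \<Rightarrow> 'k)" by (rule zeroL) simp_all
  have f_4_4_1: "Rel (word [4,4,1]) (vsc (of_int (eps 4 4 1)) omega :: nat list \<Rightarrow> 'k)" by (rule zeroR) simp_all
  have f_4_4_2: "Rel (word [4,4,2]) (vsc (of_int (eps 4 4 2)) omega :: nat list \<Rightarrow> 'k)" by (rule zeroR) simp_all
  have f_4_4_3: "Rel (word [4,4,3]) (vsc (of_int (eps 4 4 3)) omega :: nat list \<Rightarrow> 'k)" by (rule zeroR) simp_all
  have f_4_4_4: "Rel (word [4,4,4]) (vsc (of_int (eps 4 4 4)) omega :: nat list \<Rightarrow> 'k)" by (rule zeroR) simp_all
  have f_4_4_5: "Rel (word [4,4,5]) (vsc (of_int (eps 4 4 5)) omega :: nat list \<Rightarrow> 'k)" by (rule zeroR) simp_all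
  have f_4_4_6: "Rel (word [4,4,6]) (vsc (of_int (eps 4 4 6)) omega :: nat list \<Rightarrow> 'k)" by (rule zeroR) simp_all
  have f_4_4_7: "Rel (word [4,4,7]) (vsc (of_int (eps 4 4 7)) omega :: nat list \<Rightarrow> 'k)" by (rule zeroR) simp_all
  have f_4_5_5: "Rel (word [4,5,5]) (vsc (of_int (eps 4 5 5)) omega :: nat list \<Rightarrow> 'k)" by (rule zeroL) simp_all
  have f_4_6_6: "Rel (word [4,6,6]) (vsc (of_int (eps 4 6 6)) omega :: nat list \<Rightarrow> 'k)" by (rule zeroL) simp_all
  have f_4_7_7: "Rel (word [4,7,7]) (vsc (of_int (eps 4 7 7)) omega :: nat list \<Rightarrow> 'k)" by (rule zeroL) simp_all
  have f_5_1_1: "Rel (word [5,1,1]) (vsc (of_int (eps 5 1 1)) omega :: nat list \<Rightarrow> 'k)" by (rule zeroL) simp_all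
  have f_5_2_2: "Rel (word [5,2,2]) (vsc (of_int (eps 5 2 2)) omega :: nat list \<Rightarrow> 'k)" by (rule zeroL) simp_all
  have f_5_3_3: "Rel (word [5,3,3]) (vsc (of_int (eps 5 3 3)) omega :: nat list \<Rightarrow> 'k)" by (rule zeroL) simp_all
  have f_5_4_4: "Rel (word [5,4,4]) (vsc (of_int (eps 5 4 4)) omega :: nat list \<Rightarrow> 'k)" by (rule zeroL) simp_all
  have f_5_5_1: "Rel (word [5,5,1]) (vsc (of_int (eps 5 5 1)) omega :: nat list \<Rightarrow> 'k)" by (rule zeroR) simp_all
  have f_5_5_2: "Rel (word [5,5,2]) (vsc (of_int (eps 5 5 2)) omega :: nat list \<Rightarrow> 'k)" by (rule zeroR) simp_all
  have f_5_5_3: "Rel (word [5,5,3]) (vsc (of_int (eps 5 5 3)) omega :: nat list \<Rightarrow> 'k)" by (rule zeroR) simp_all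
  have f_5_5_4: "Rel (word [5,5,4]) (vsc (of_int (eps 5 5 4)) omega :: nat list \<Rightarrow> 'k)" by (rule zeroR) simp_all
  have f_5_5_5: "Rel (word [5,5,5]) (vsc (of_int (eps 5 5 5)) omega :: nat list \<Rightarrow> 'k)" by (rule zeroR) simp_all
  have f_5_5_6: "Rel (word [5,5,6]) (vsc (of_int (eps 5 5 6)) omega :: nat list \<Rightarrow> 'k)" by (rule zeroR) simp_all
  have f_5_5_7: "Rel (word [5,5,7]) (vsc (of_int (eps 5 5 7)) omega :: nat list \<Rightarrow> 'k)" by (rule zeroR) simp_all
  have f_5_6_6: "Rel (word [5,6,6]) (vsc (of_int (eps 5 6 6)) omega :: nat list \<Rightarrow> 'k)" by (rule zeroL) simp_all
  have f_5_7_7: "Rel (word [5,7,7]) (vsc (of_int (eps 5 7 7)) omega :: nat list \<Rightarrow> 'k)" by (rule zeroL) simp_all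
  have f_6_1_1: "Rel (word [6,1,1]) (vsc (of_int (eps 6 1 1)) omega :: nat list \<Rightarrow> 'k)" by (rule zeroL) simp_all
  have f_6_2_2: "Rel (word [6,2,2]) (vsc (of_int (eps 6 2 2)) omega :: nat list \<Rightarrow> 'k)" by (rule zeroL) simp_all
  have f_6_3_3: "Rel (word [6,3,3]) (vsc (of_int (eps 6 3 3)) omega :: nat list \<Rightarrow> 'k)" by (rule zeroL) simp_all
  have f_6_4_4: "Rel (word [6,4,4]) (vsc (of_int (eps 6 4 4)) omega :: nat list \<Rightarrow> 'k)" by (rule zeroL) simp_all
  have f_6_5_5: "Rel (word [6,5,5]) (vsc (of_int (eps 6 5 5)) omega :: nat list \<Rightarrow> 'k)" by (rule zeroL) simp_all
  have f_6_6_1: "Rel (word [6,6,1]) (vsc (of_int (eps 6 6 1)) omega :: nat list \<Rightarrow> 'k)" by (rule zeroR) simp_all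
  have f_6_6_2: "Rel (word [6,6,2]) (vsc (of_int (eps 6 6 2)) omega :: nat list \<Rightarrow> 'k)" by (rule zeroR) simp_all
  have f_6_6_3: "Rel (word [6,6,3]) (vsc (of_int (eps 6 6 3)) omega :: nat list \<Rightarrow> 'k)" by (rule zeroR) simp_all
  have f_6_6_4: "Rel (word [6,6,4]) (vsc (of_int (eps 6 6 4)) omega :: nat list \<Rightarrow> 'k)" by (rule zeroR) simp_all
  have f_6_6_5: "Rel (word [6,6,5]) (vsc (of_int (eps 6 6 5)) omega :: nat list \<Rightarrow> 'k)" by (rule zeroR) simp_all
  have f_6_6_6: "Rel (word [6,6,6]) (vsc (of_int (eps 6 6 6)) omega :: nat list \<Rightarrow> 'k)" by (rule zeroR) simp_all
  have f_6_6_7: "Rel (word [6,6,7]) (vsc (of_int (eps 6 6 7)) omega :: nat list \<Rightarrow> 'k)" by (rule zeroR) simp_all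
  have f_6_7_7: "Rel (word [6,7,7]) (vsc (of_int (eps 6 7 7)) omega :: nat list \<Rightarrow> 'k)" by (rule zeroL) simp_all
  have f_7_1_1: "Rel (word [7,1,1]) (vsc (of_int (eps 7 1 1)) omega :: nat list \<Rightarrow> 'k)" by (rule zeroL) simp_all
  have f_7_2_2: "Rel (word [7,2,2]) (vsc (of_int (eps 7 2 2)) omega :: nat list \<Rightarrow> 'k)" by (rule zeroL) simp_all
  have f_7_3_3: "Rel (word [7,3,3]) (vsc (of_int (eps 7 3 3)) omega :: nat list \<Rightarrow> 'k)" by (rule zeroL) simp_all
  have f_7_4_4: "Rel (word [7,4,4]) (vsc (of_int (eps 7 4 4)) omega :: nat list \<Rightarrow> 'k)" by (rule zeroL) simp_all
  have f_7_5_5: "Rel (word [7,5,5]) (vsc (of_int (eps 7 5 5)) omega :: nat list \<Rightarrow> 'k)" by (rule zeroL) simp_all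
  have f_7_6_6: "Rel (word [7,6,6]) (vsc (of_int (eps 7 6 6)) omega :: nat list \<Rightarrow> 'k)" by (rule zeroL) simp_all
  have f_7_7_1: "Rel (word [7,7,1]) (vsc (of_int (eps 7 7 1)) omega :: nat list \<Rightarrow> 'k)" by (rule zeroR) simp_all
  have f_7_7_2: "Rel (word [7,7,2]) (vsc (of_int (eps 7 7 2)) omega :: nat list \<Rightarrow> 'k)" by (rule zeroR) simp_all
  have f_7_7_3: "Rel (word [7,7,3]) (vsc (of_int (eps 7 7 3)) omega :: nat list \<Rightarrow> 'k)" by (rule zeroR) simp_all
  have f_7_7_4: "Rel (word [7,7,4]) (vsc (of_int (eps 7 7 4)) omega :: nat list \<Rightarrow> 'k)" by (rule zeroR) simp_all
  have f_7_7_5: "Rel (word [7,7,5]) (vsc (of_int (eps 7 7 5)) omega :: nat list \<Rightarrow> 'k)" by (rule zeroR) simp_all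
  have f_7_7_6: "Rel (word [7,7,6]) (vsc (of_int (eps 7 7 6)) omega :: nat list \<Rightarrow> 'k)" by (rule zeroR) simp_all
  have f_7_7_7: "Rel (word [7,7,7]) (vsc (of_int (eps 7 7 7)) omega :: nat list \<Rightarrow> 'k)" by (rule zeroR) simp_all
  have f_2_1_3: "Rel (word [2,1,3]) (vsc (of_int (eps 2 1 3)) omega :: nat list \<Rightarrow> 'k)" by (rule stepR7[where e="-1", OF f_1_2_3]) (simp_all add: eps_simps)
  have f_4_7_3: "Rel (word [4,7,3]) (vsc (of_int (eps 4 7 3)) omega :: nat list \<Rightarrow> 'k)" by (rule stepR7[where e="-1", OF f_1_2_3]) (simp_all add: eps_simps)
  have f_5_6_3: "Rel (word [5,6,3]) (vsc (of_int (eps 5 6 3)) omega :: nat list \<Rightarrow> 'k)" by (rule stepR7[where e="-1", OF f_1_2_3]) (simp_all add: eps_simps)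
  have f_6_5_3: "Rel (word [6,5,3]) (vsc (of_int (eps 6 5 3)) omega :: nat list \<Rightarrow> 'k)" by (rule stepR7[where e="1", OF f_1_2_3]) (simp_all add: eps_simps)
  have f_7_4_3: "Rel (word [7,4,3]) (vsc (of_int (eps 7 4 3)) omega :: nat list \<Rightarrow> 'k)" by (rule stepR7[where e="1", OF f_1_2_3]) (simp_all add: eps_simps)
  have f_1_3_2: "Rel (word [1,3,2]) (vsc (of_int (eps 1 3 2)) omega :: nat list \<Rightarrow> 'k)" by (rule stepL7[where e="-1", OF f_1_2_3]) (simp_all add: eps_simps)
  have f_1_4_5: "Rel (word [1,4,5]) (vsc (of_int (eps 1 4 5)) omega :: nat list \<Rightarrow> 'k)" by (rule stepL7[where e="1", OF f_1_2_3]) (simp_all add: eps_simps)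
  have f_1_5_4: "Rel (word [1,5,4]) (vsc (of_int (eps 1 5 4)) omega :: nat list \<Rightarrow> 'k)" by (rule stepL7[where e="-1", OF f_1_2_3]) (simp_all add: eps_simps)
  have f_1_6_7: "Rel (word [1,6,7]) (vsc (of_int (eps 1 6 7)) omega :: nat list \<Rightarrow> 'k)" by (rule stepL7[where e="1", OF f_1_2_3]) (simp_all add: eps_simps)
  have f_1_7_6: "Rel (word [1,7,6]) (vsc (of_int (eps 1 7 6)) omega :: nat list \<Rightarrow> 'k)" by (rule stepL7[where e="-1", OF f_1_2_3]) (simp_all add: eps_simps)
  have f_1_2_1: "Rel (word [1,2,1]) (vsc (of_int (eps 1 2 1)) omega :: nat list \<Rightarrow> 'k)" by (rule stepL7[where e="-1", OF f_1_1_2]) (simp_all add: eps_simps)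
  have f_1_4_7: "Rel (word [1,4,7]) (vsc (of_int (eps 1 4 7)) omega :: nat list \<Rightarrow> 'k)" by (rule stepL7[where e="-1", OF f_1_1_2]) (simp_all add: eps_simps)
  have f_1_5_6: "Rel (word [1,5,6]) (vsc (of_int (eps 1 5 6)) omega :: nat list \<Rightarrow> 'k)" by (rule stepL7[where e="-1", OF f_1_1_2]) (simp_all add: eps_simps)
  have f_1_6_5: "Rel (word [1,6,5]) (vsc (of_int (eps 1 6 5)) omega :: nat list \<Rightarrow> 'k)" by (rule stepL7[where e="1", OF f_1_1_2]) (simp_all add: eps_simps)
  have f_1_7_4: "Rel (word [1,7,4]) (vsc (of_int (eps 1 7 4)) omega :: nat list \<Rightarrow> 'k)" by (rule stepL7[where e="1", OF f_1_1_2]) (simp_all add: eps_simps)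
  have f_1_3_1: "Rel (word [1,3,1]) (vsc (of_int (eps 1 3 1)) omega :: nat list \<Rightarrow> 'k)" by (rule stepL7[where e="-1", OF f_1_1_3]) (simp_all add: eps_simps)
  have f_1_4_6: "Rel (word [1,4,6]) (vsc (of_int (eps 1 4 6)) omega :: nat list \<Rightarrow> 'k)" by (rule stepL7[where e="-1", OF f_1_1_3]) (simp_all add: eps_simps)
  have f_1_5_7: "Rel (word [1,5,7]) (vsc (of_int (eps 1 5 7)) omega :: nat list \<Rightarrow> 'k)" by (rule stepL7[where e="1", OF f_1_1_3]) (simp_all add: eps_simps)
  have f_1_6_4: "Rel (word [1,6,4]) (vsc (of_int (eps 1 6 4)) omega :: nat list \<Rightarrow> 'k)" by (rule stepL7[where e="1", OF f_1_1_3]) (simp_all add: eps_simps)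
  have f_1_7_5: "Rel (word [1,7,5]) (vsc (of_int (eps 1 7 5)) omega :: nat list \<Rightarrow> 'k)" by (rule stepL7[where e="-1", OF f_1_1_3]) (simp_all add: eps_simps)
  have f_1_2_7: "Rel (word [1,2,7]) (vsc (of_int (eps 1 2 7)) omega :: nat list \<Rightarrow> 'k)" by (rule stepL7[where e="1", OF f_1_1_4]) (simp_all add: eps_simps)
  have f_1_3_6: "Rel (word [1,3,6]) (vsc (of_int (eps 1 3 6)) omega :: nat list \<Rightarrow> 'k)" by (rule stepL7[where e="1", OF f_1_1_4]) (simp_all add: eps_simps)
  have f_1_4_1: "Rel (word [1,4,1]) (vsc (of_int (eps 1 4 1)) omega :: nat list \<Rightarrow> 'k)" by (rule stepL7[where e="-1", OF f_1_1_4]) (simp_all add: eps_simps)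
  have f_1_6_3: "Rel (word [1,6,3]) (vsc (of_int (eps 1 6 3)) omega :: nat list \<Rightarrow> 'k)" by (rule stepL7[where e="-1", OF f_1_1_4]) (simp_all add: eps_simps)
  have f_1_7_2: "Rel (word [1,7,2]) (vsc (of_int (eps 1 7 2)) omega :: nat list \<Rightarrow> 'k)" by (rule stepL7[where e="-1", OF f_1_1_4]) (simp_all add: eps_simps)
  have f_1_2_6: "Rel (word [1,2,6]) (vsc (of_int (eps 1 2 6)) omega :: nat list \<Rightarrow> 'k)" by (rule stepL7[where e="1", OF f_1_1_5]) (simp_all add: eps_simps)
  have f_1_3_7: "Rel (word [1,3,7]) (vsc (of_int (eps 1 3 7)) omega :: nat list \<Rightarrow> 'k)" by (rule stepL7[where e="-1", OF f_1_1_5]) (simp_all add: eps_simps)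
  have f_1_5_1: "Rel (word [1,5,1]) (vsc (of_int (eps 1 5 1)) omega :: nat list \<Rightarrow> 'k)" by (rule stepL7[where e="-1", OF f_1_1_5]) (simp_all add: eps_simps)
  have f_1_6_2: "Rel (word [1,6,2]) (vsc (of_int (eps 1 6 2)) omega :: nat list \<Rightarrow> 'k)" by (rule stepL7[where e="-1", OF f_1_1_5]) (simp_all add: eps_simps)
  have f_1_7_3: "Rel (word [1,7,3]) (vsc (of_int (eps 1 7 3)) omega :: nat list \<Rightarrow> 'k)" by (rule stepL7[where e="1", OF f_1_1_5]) (simp_all add: eps_simps)
  have f_1_2_5: "Rel (word [1,2,5]) (vsc (of_int (eps 1 2 5)) omega :: nat list \<Rightarrow> 'k)" by (rule stepL7[where e="-1", OF f_1_1_6]) (simp_all add: eps_simps)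
  have f_1_3_4: "Rel (word [1,3,4]) (vsc (of_int (eps 1 3 4)) omega :: nat list \<Rightarrow> 'k)" by (rule stepL7[where e="-1", OF f_1_1_6]) (simp_all add: eps_simps)
  have f_1_4_3: "Rel (word [1,4,3]) (vsc (of_int (eps 1 4 3)) omega :: nat list \<Rightarrow> 'k)" by (rule stepL7[where e="1", OF f_1_1_6]) (simp_all add: eps_simps)
  have f_1_5_2: "Rel (word [1,5,2]) (vsc (of_int (eps 1 5 2)) omega :: nat list \<Rightarrow> 'k)" by (rule stepL7[where e="1", OF f_1_1_6]) (simp_all add: eps_simps)
  have f_1_6_1: "Rel (word [1,6,1]) (vsc (of_int (eps 1 6 1)) omega :: nat list \<Rightarrow> 'k)" by (rule stepL7[where e="-1", OF f_1_1_6]) (simp_all add: eps_simps)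
  have f_1_2_4: "Rel (word [1,2,4]) (vsc (of_int (eps 1 2 4)) omega :: nat list \<Rightarrow> 'k)" by (rule stepL7[where e="-1", OF f_1_1_7]) (simp_all add: eps_simps)
  have f_1_3_5: "Rel (word [1,3,5]) (vsc (of_int (eps 1 3 5)) omega :: nat list \<Rightarrow> 'k)" by (rule stepL7[where e="1", OF f_1_1_7]) (simp_all add: eps_simps)
  have f_1_4_2: "Rel (word [1,4,2]) (vsc (of_int (eps 1 4 2)) omega :: nat list \<Rightarrow> 'k)" by (rule stepL7[where e="1", OF f_1_1_7]) (simp_all add: eps_simps)
  have f_1_5_3: "Rel (word [1,5,3]) (vsc (of_int (eps 1 5 3)) omega :: nat list \<Rightarrow> 'k)" by (rule stepL7[where e="-1", OF f_1_1_7]) (simp_all add: eps_simps)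
  have f_1_7_1: "Rel (word [1,7,1]) (vsc (of_int (eps 1 7 1)) omega :: nat list \<Rightarrow> 'k)" by (rule stepL7[where e="-1", OF f_1_1_7]) (simp_all add: eps_simps)
  have f_2_1_2: "Rel (word [2,1,2]) (vsc (of_int (eps 2 1 2)) omega :: nat list \<Rightarrow> 'k)" by (rule stepR7[where e="-1", OF f_1_2_2]) (simp_all add: eps_simps)
  have f_4_7_2: "Rel (word [4,7,2]) (vsc (of_int (eps 4 7 2)) omega :: nat list \<Rightarrow> 'k)" by (rule stepR7[where e="-1", OF f_1_2_2]) (simp_all add: eps_simps)
  have f_5_6_2: "Rel (word [5,6,2]) (vsc (of_int (eps 5 6 2)) omega :: nat list \<Rightarrow> 'k)" by (rule stepR7[where e="-1", OF f_1_2_2]) (simp_all add: eps_simps)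
  have f_6_5_2: "Rel (word [6,5,2]) (vsc (of_int (eps 6 5 2)) omega :: nat list \<Rightarrow> 'k)" by (rule stepR7[where e="1", OF f_1_2_2]) (simp_all add: eps_simps)
  have f_7_4_2: "Rel (word [7,4,2]) (vsc (of_int (eps 7 4 2)) omega :: nat list \<Rightarrow> 'k)" by (rule stepR7[where e="1", OF f_1_2_2]) (simp_all add: eps_simps)
  have f_3_1_3: "Rel (word [3,1,3]) (vsc (of_int (eps 3 1 3)) omega :: nat list \<Rightarrow> 'k)" by (rule stepR7[where e="-1", OF f_1_3_3]) (simp_all add: eps_simps)
  have f_4_6_3: "Rel (word [4,6,3]) (vsc (of_int (eps 4 6 3)) omega :: nat list \<Rightarrow> 'k)" by (rule stepR7[where e="-1", OF f_1_3_3]) (simp_all add: eps_simps)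
  have f_5_7_3: "Rel (word [5,7,3]) (vsc (of_int (eps 5 7 3)) omega :: nat list \<Rightarrow> 'k)" by (rule stepR7[where e="1", OF f_1_3_3]) (simp_all add: eps_simps)
  have f_6_4_3: "Rel (word [6,4,3]) (vsc (of_int (eps 6 4 3)) omega :: nat list \<Rightarrow> 'k)" by (rule stepR7[where e="1", OF f_1_3_3]) (simp_all add: eps_simps)
  have f_7_5_3: "Rel (word [7,5,3]) (vsc (of_int (eps 7 5 3)) omega :: nat list \<Rightarrow> 'k)" by (rule stepR7[where e="-1", OF f_1_3_3]) (simp_all add: eps_simps)
  have f_2_7_4: "Rel (word [2,7,4]) (vsc (of_int (eps 2 7 4)) omega :: nat list \<Rightarrow> 'k)" by (rule stepR7[where e="1", OF f_1_4_4]) (simp_all add: eps_simps)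
  have f_3_6_4: "Rel (word [3,6,4]) (vsc (of_int (eps 3 6 4)) omega :: nat list \<Rightarrow> 'k)" by (rule stepR7[where e="1", OF f_1_4_4]) (simp_all add: eps_simps)
  have f_4_1_4: "Rel (word [4,1,4]) (vsc (of_int (eps 4 1 4)) omega :: nat list \<Rightarrow> 'k)" by (rule stepR7[where e="-1", OF f_1_4_4]) (simp_all add: eps_simps)
  have f_6_3_4: "Rel (word [6,3,4]) (vsc (of_int (eps 6 3 4)) omega :: nat list \<Rightarrow> 'k)" by (rule stepR7[where e="-1", OF f_1_4_4]) (simp_all add: eps_simps)
  have f_7_2_4: "Rel (word [7,2,4]) (vsc (of_int (eps 7 2 4)) omega :: nat list \<Rightarrow> 'k)" by (rule stepR7[where e="-1", OF f_1_4_4]) (simp_all add: eps_simps)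
  have f_2_6_5: "Rel (word [2,6,5]) (vsc (of_int (eps 2 6 5)) omega :: nat list \<Rightarrow> 'k)" by (rule stepR7[where e="1", OF f_1_5_5]) (simp_all add: eps_simps)
  have f_3_7_5: "Rel (word [3,7,5]) (vsc (of_int (eps 3 7 5)) omega :: nat list \<Rightarrow> 'k)" by (rule stepR7[where e="-1", OF f_1_5_5]) (simp_all add: eps_simps)
  have f_5_1_5: "Rel (word [5,1,5]) (vsc (of_int (eps 5 1 5)) omega :: nat list \<Rightarrow> 'k)" by (rule stepR7[where e="-1", OF f_1_5_5]) (simp_all add: eps_simps)
  have f_6_2_5: "Rel (word [6,2,5]) (vsc (of_int (eps 6 2 5)) omega :: nat list \<Rightarrow> 'k)" by (rule stepR7[where e="-1", OF f_1_5_5]) (simp_all add: eps_simps)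
  have f_7_3_5: "Rel (word [7,3,5]) (vsc (of_int (eps 7 3 5)) omega :: nat list \<Rightarrow> 'k)" by (rule stepR7[where e="1", OF f_1_5_5]) (simp_all add: eps_simps)
  have f_2_5_6: "Rel (word [2,5,6]) (vsc (of_int (eps 2 5 6)) omega :: nat list \<Rightarrow> 'k)" by (rule stepR7[where e="-1", OF f_1_6_6]) (simp_all add: eps_simps)
  have f_3_4_6: "Rel (word [3,4,6]) (vsc (of_int (eps 3 4 6)) omega :: nat list \<Rightarrow> 'k)" by (rule stepR7[where e="-1", OF f_1_6_6]) (simp_all add: eps_simps)
  have f_4_3_6: "Rel (word [4,3,6]) (vsc (of_int (eps 4 3 6)) omega :: nat list \<Rightarrow> 'k)" by (rule stepR7[where e="1", OF f_1_6_6]) (simp_all add: eps_simps)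
  have f_5_2_6: "Rel (word [5,2,6]) (vsc (of_int (eps 5 2 6)) omega :: nat list \<Rightarrow> 'k)" by (rule stepR7[where e="1", OF f_1_6_6]) (simp_all add: eps_simps)
  have f_6_1_6: "Rel (word [6,1,6]) (vsc (of_int (eps 6 1 6)) omega :: nat list \<Rightarrow> 'k)" by (rule stepR7[where e="-1", OF f_1_6_6]) (simp_all add: eps_simps)
  have f_2_4_7: "Rel (word [2,4,7]) (vsc (of_int (eps 2 4 7)) omega :: nat list \<Rightarrow> 'k)" by (rule stepR7[where e="-1", OF f_1_7_7]) (simp_all add: eps_simps)
  have f_3_5_7: "Rel (word [3,5,7]) (vsc (of_int (eps 3 5 7)) omega :: nat list \<Rightarrow> 'k)" by (rule stepR7[where e="1", OF f_1_7_7]) (simp_all add: eps_simps)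
  have f_4_2_7: "Rel (word [4,2,7]) (vsc (of_int (eps 4 2 7)) omega :: nat list \<Rightarrow> 'k)" by (rule stepR7[where e="1", OF f_1_7_7]) (simp_all add: eps_simps)
  have f_5_3_7: "Rel (word [5,3,7]) (vsc (of_int (eps 5 3 7)) omega :: nat list \<Rightarrow> 'k)" by (rule stepR7[where e="-1", OF f_1_7_7]) (simp_all add: eps_simps)
  have f_7_1_7: "Rel (word [7,1,7]) (vsc (of_int (eps 7 1 7)) omega :: nat list \<Rightarrow> 'k)" by (rule stepR7[where e="-1", OF f_1_7_7]) (simp_all add: eps_simps)
  have f_4_7_1: "Rel (word [4,7,1]) (vsc (of_int (eps 4 7 1)) omega :: nat list \<Rightarrow> 'k)" by (rule stepR7[where e="1", OF f_2_1_1]) (simp_all add: eps_simps)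
  have f_5_6_1: "Rel (word [5,6,1]) (vsc (of_int (eps 5 6 1)) omega :: nat list \<Rightarrow> 'k)" by (rule stepR7[where e="1", OF f_2_1_1]) (simp_all add: eps_simps)
  have f_6_5_1: "Rel (word [6,5,1]) (vsc (of_int (eps 6 5 1)) omega :: nat list \<Rightarrow> 'k)" by (rule stepR7[where e="-1", OF f_2_1_1]) (simp_all add: eps_simps)
  have f_7_4_1: "Rel (word [7,4,1]) (vsc (of_int (eps 7 4 1)) omega :: nat list \<Rightarrow> 'k)" by (rule stepR7[where e="-1", OF f_2_1_1]) (simp_all add: eps_simps)
  have f_2_3_2: "Rel (word [2,3,2]) (vsc (of_int (eps 2 3 2)) omega :: nat list \<Rightarrow> 'k)" by (rule stepL7[where e="-1", OF f_2_2_3]) (simp_all add: eps_simps)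
  have f_2_4_5: "Rel (word [2,4,5]) (vsc (of_int (eps 2 4 5)) omega :: nat list \<Rightarrow> 'k)" by (rule stepL7[where e="1", OF f_2_2_3]) (simp_all add: eps_simps)
  have f_2_5_4: "Rel (word [2,5,4]) (vsc (of_int (eps 2 5 4)) omega :: nat list \<Rightarrow> 'k)" by (rule stepL7[where e="-1", OF f_2_2_3]) (simp_all add: eps_simps)
  have f_2_6_7: "Rel (word [2,6,7]) (vsc (of_int (eps 2 6 7)) omega :: nat list \<Rightarrow> 'k)" by (rule stepL7[where e="1", OF f_2_2_3]) (simp_all add: eps_simps)
  have f_2_7_6: "Rel (word [2,7,6]) (vsc (of_int (eps 2 7 6)) omega :: nat list \<Rightarrow> 'k)" by (rule stepL7[where e="-1", OF f_2_2_3]) (simp_all add: eps_simps)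
  have f_2_1_7: "Rel (word [2,1,7]) (vsc (of_int (eps 2 1 7)) omega :: nat list \<Rightarrow> 'k)" by (rule stepL7[where e="-1", OF f_2_2_4]) (simp_all add: eps_simps)
  have f_2_3_5: "Rel (word [2,3,5]) (vsc (of_int (eps 2 3 5)) omega :: nat list \<Rightarrow> 'k)" by (rule stepL7[where e="-1", OF f_2_2_4]) (simp_all add: eps_simps)
  have f_2_4_2: "Rel (word [2,4,2]) (vsc (of_int (eps 2 4 2)) omega :: nat list \<Rightarrow> 'k)" by (rule stepL7[where e="-1", OF f_2_2_4]) (simp_all add: eps_simps)
  have f_2_5_3: "Rel (word [2,5,3]) (vsc (of_int (eps 2 5 3)) omega :: nat list \<Rightarrow> 'k)" by (rule stepL7[where e="1", OF f_2_2_4]) (simp_all add: eps_simps)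
  have f_2_7_1: "Rel (word [2,7,1]) (vsc (of_int (eps 2 7 1)) omega :: nat list \<Rightarrow> 'k)" by (rule stepL7[where e="1", OF f_2_2_4]) (simp_all add: eps_simps)
  have f_2_1_6: "Rel (word [2,1,6]) (vsc (of_int (eps 2 1 6)) omega :: nat list \<Rightarrow> 'k)" by (rule stepL7[where e="-1", OF f_2_2_5]) (simp_all add: eps_simps)
  have f_2_3_4: "Rel (word [2,3,4]) (vsc (of_int (eps 2 3 4)) omega :: nat list \<Rightarrow> 'k)" by (rule stepL7[where e="1", OF f_2_2_5]) (simp_all add: eps_simps)
  have f_2_4_3: "Rel (word [2,4,3]) (vsc (of_int (eps 2 4 3)) omega :: nat list \<Rightarrow> 'k)" by (rule stepL7[where e="-1", OF f_2_2_5]) (simp_all add: eps_simps)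
  have f_2_5_2: "Rel (word [2,5,2]) (vsc (of_int (eps 2 5 2)) omega :: nat list \<Rightarrow> 'k)" by (rule stepL7[where e="-1", OF f_2_2_5]) (simp_all add: eps_simps)
  have f_2_6_1: "Rel (word [2,6,1]) (vsc (of_int (eps 2 6 1)) omega :: nat list \<Rightarrow> 'k)" by (rule stepL7[where e="1", OF f_2_2_5]) (simp_all add: eps_simps)
  have f_2_1_5: "Rel (word [2,1,5]) (vsc (of_int (eps 2 1 5)) omega :: nat list \<Rightarrow> 'k)" by (rule stepL7[where e="1", OF f_2_2_6]) (simp_all add: eps_simps)
  have f_2_3_7: "Rel (word [2,3,7]) (vsc (of_int (eps 2 3 7)) omega :: nat list \<Rightarrow> 'k)" by (rule stepL7[where e="-1", OF f_2_2_6]) (simp_all add: eps_simps)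
  have f_2_5_1: "Rel (word [2,5,1]) (vsc (of_int (eps 2 5 1)) omega :: nat list \<Rightarrow> 'k)" by (rule stepL7[where e="-1", OF f_2_2_6]) (simp_all add: eps_simps)
  have f_2_6_2: "Rel (word [2,6,2]) (vsc (of_int (eps 2 6 2)) omega :: nat list \<Rightarrow> 'k)" by (rule stepL7[where e="-1", OF f_2_2_6]) (simp_all add: eps_simps)
  have f_2_7_3: "Rel (word [2,7,3]) (vsc (of_int (eps 2 7 3)) omega :: nat list \<Rightarrow> 'k)" by (rule stepL7[where e="1", OF f_2_2_6]) (simp_all add: eps_simps)
  have f_2_1_4: "Rel (word [2,1,4]) (vsc (of_int (eps 2 1 4)) omega :: nat list \<Rightarrow> 'k)" by (rule stepL7[where e="1", OF f_2_2_7]) (simp_all add: eps_simps)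
  have f_2_3_6: "Rel (word [2,3,6]) (vsc (of_int (eps 2 3 6)) omega :: nat list \<Rightarrow> 'k)" by (rule stepL7[where e="1", OF f_2_2_7]) (simp_all add: eps_simps)
  have f_2_4_1: "Rel (word [2,4,1]) (vsc (of_int (eps 2 4 1)) omega :: nat list \<Rightarrow> 'k)" by (rule stepL7[where e="-1", OF f_2_2_7]) (simp_all add: eps_simps)
  have f_2_6_3: "Rel (word [2,6,3]) (vsc (of_int (eps 2 6 3)) omega :: nat list \<Rightarrow> 'k)" by (rule stepL7[where e="-1", OF f_2_2_7]) (simp_all add: eps_simps)
  have f_2_7_2: "Rel (word [2,7,2]) (vsc (of_int (eps 2 7 2)) omega :: nat list \<Rightarrow> 'k)" by (rule stepL7[where e="-1", OF f_2_2_7]) (simp_all add: eps_simps)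
  have f_3_2_3: "Rel (word [3,2,3]) (vsc (of_int (eps 3 2 3)) omega :: nat list \<Rightarrow> 'k)" by (rule stepR7[where e="-1", OF f_2_3_3]) (simp_all add: eps_simps)
  have f_4_5_3: "Rel (word [4,5,3]) (vsc (of_int (eps 4 5 3)) omega :: nat list \<Rightarrow> 'k)" by (rule stepR7[where e="1", OF f_2_3_3]) (simp_all add: eps_simps)
  have f_5_4_3: "Rel (word [5,4,3]) (vsc (of_int (eps 5 4 3)) omega :: nat list \<Rightarrow> 'k)" by (rule stepR7[where e="-1", OF f_2_3_3]) (simp_all add: eps_simps)
  have f_6_7_3: "Rel (word [6,7,3]) (vsc (of_int (eps 6 7 3)) omega :: nat list \<Rightarrow> 'k)" by (rule stepR7[where e="1", OF f_2_3_3]) (simp_all add: eps_simps)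
  have f_7_6_3: "Rel (word [7,6,3]) (vsc (of_int (eps 7 6 3)) omega :: nat list \<Rightarrow> 'k)" by (rule stepR7[where e="-1", OF f_2_3_3]) (simp_all add: eps_simps)
  have f_3_5_4: "Rel (word [3,5,4]) (vsc (of_int (eps 3 5 4)) omega :: nat list \<Rightarrow> 'k)" by (rule stepR7[where e="-1", OF f_2_4_4]) (simp_all add: eps_simps)
  have f_4_2_4: "Rel (word [4,2,4]) (vsc (of_int (eps 4 2 4)) omega :: nat list \<Rightarrow> 'k)" by (rule stepR7[where e="-1", OF f_2_4_4]) (simp_all add: eps_simps)
  have f_5_3_4: "Rel (word [5,3,4]) (vsc (of_int (eps 5 3 4)) omega :: nat list \<Rightarrow> 'k)" by (rule stepR7[where e="1", OF f_2_4_4]) (simp_all add: eps_simps)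
  have f_7_1_4: "Rel (word [7,1,4]) (vsc (of_int (eps 7 1 4)) omega :: nat list \<Rightarrow> 'k)" by (rule stepR7[where e="1", OF f_2_4_4]) (simp_all add: eps_simps)
  have f_3_4_5: "Rel (word [3,4,5]) (vsc (of_int (eps 3 4 5)) omega :: nat list \<Rightarrow> 'k)" by (rule stepR7[where e="1", OF f_2_5_5]) (simp_all add: eps_simps)
  have f_4_3_5: "Rel (word [4,3,5]) (vsc (of_int (eps 4 3 5)) omega :: nat list \<Rightarrow> 'k)" by (rule stepR7[where e="-1", OF f_2_5_5]) (simp_all add: eps_simps)
  have f_5_2_5: "Rel (word [5,2,5]) (vsc (of_int (eps 5 2 5)) omega :: nat list \<Rightarrow> 'k)" by (rule stepR7[where e="-1", OF f_2_5_5]) (simp_all add: eps_simps)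
  have f_6_1_5: "Rel (word [6,1,5]) (vsc (of_int (eps 6 1 5)) omega :: nat list \<Rightarrow> 'k)" by (rule stepR7[where e="1", OF f_2_5_5]) (simp_all add: eps_simps)
  have f_3_7_6: "Rel (word [3,7,6]) (vsc (of_int (eps 3 7 6)) omega :: nat list \<Rightarrow> 'k)" by (rule stepR7[where e="-1", OF f_2_6_6]) (simp_all add: eps_simps)
  have f_5_1_6: "Rel (word [5,1,6]) (vsc (of_int (eps 5 1 6)) omega :: nat list \<Rightarrow> 'k)" by (rule stepR7[where e="-1", OF f_2_6_6]) (simp_all add: eps_simps)
  have f_6_2_6: "Rel (word [6,2,6]) (vsc (of_int (eps 6 2 6)) omega :: nat list \<Rightarrow> 'k)" by (rule stepR7[where e="-1", OF f_2_6_6]) (simp_all add: eps_simps)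
  have f_7_3_6: "Rel (word [7,3,6]) (vsc (of_int (eps 7 3 6)) omega :: nat list \<Rightarrow> 'k)" by (rule stepR7[where e="1", OF f_2_6_6]) (simp_all add: eps_simps)
  have f_3_6_7: "Rel (word [3,6,7]) (vsc (of_int (eps 3 6 7)) omega :: nat list \<Rightarrow> 'k)" by (rule stepR7[where e="1", OF f_2_7_7]) (simp_all add: eps_simps)
  have f_4_1_7: "Rel (word [4,1,7]) (vsc (of_int (eps 4 1 7)) omega :: nat list \<Rightarrow> 'k)" by (rule stepR7[where e="-1", OF f_2_7_7]) (simp_all add: eps_simps)
  have f_6_3_7: "Rel (word [6,3,7]) (vsc (of_int (eps 6 3 7)) omega :: nat list \<Rightarrow> 'k)" by (rule stepR7[where e="-1", OF f_2_7_7]) (simp_all add: eps_simps)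
  have f_7_2_7: "Rel (word [7,2,7]) (vsc (of_int (eps 7 2 7)) omega :: nat list \<Rightarrow> 'k)" by (rule stepR7[where e="-1", OF f_2_7_7]) (simp_all add: eps_simps)
  have f_4_6_1: "Rel (word [4,6,1]) (vsc (of_int (eps 4 6 1)) omega :: nat list \<Rightarrow> 'k)" by (rule stepR7[where e="1", OF f_3_1_1]) (simp_all add: eps_simps)
  have f_5_7_1: "Rel (word [5,7,1]) (vsc (of_int (eps 5 7 1)) omega :: nat list \<Rightarrow> 'k)" by (rule stepR7[where e="-1", OF f_3_1_1]) (simp_all add: eps_simps)
  have f_6_4_1: "Rel (word [6,4,1]) (vsc (of_int (eps 6 4 1)) omega :: nat list \<Rightarrow> 'k)" by (rule stepR7[where e="-1", OF f_3_1_1]) (simp_all add: eps_simps)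
  have f_7_5_1: "Rel (word [7,5,1]) (vsc (of_int (eps 7 5 1)) omega :: nat list \<Rightarrow> 'k)" by (rule stepR7[where e="1", OF f_3_1_1]) (simp_all add: eps_simps)
  have f_4_5_2: "Rel (word [4,5,2]) (vsc (of_int (eps 4 5 2)) omega :: nat list \<Rightarrow> 'k)" by (rule stepR7[where e="-1", OF f_3_2_2]) (simp_all add: eps_simps)
  have f_5_4_2: "Rel (word [5,4,2]) (vsc (of_int (eps 5 4 2)) omega :: nat list \<Rightarrow> 'k)" by (rule stepR7[where e="1", OF f_3_2_2]) (simp_all add: eps_simps)
  have f_6_7_2: "Rel (word [6,7,2]) (vsc (of_int (eps 6 7 2)) omega :: nat list \<Rightarrow> 'k)" by (rule stepR7[where e="-1", OF f_3_2_2]) (simp_all add: eps_simps)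
  have f_7_6_2: "Rel (word [7,6,2]) (vsc (of_int (eps 7 6 2)) omega :: nat list \<Rightarrow> 'k)" by (rule stepR7[where e="1", OF f_3_2_2]) (simp_all add: eps_simps)
  have f_3_1_6: "Rel (word [3,1,6]) (vsc (of_int (eps 3 1 6)) omega :: nat list \<Rightarrow> 'k)" by (rule stepL7[where e="-1", OF f_3_3_4]) (simp_all add: eps_simps)
  have f_3_2_5: "Rel (word [3,2,5]) (vsc (of_int (eps 3 2 5)) omega :: nat list \<Rightarrow> 'k)" by (rule stepL7[where e="1", OF f_3_3_4]) (simp_all add: eps_simps)
  have f_3_4_3: "Rel (word [3,4,3]) (vsc (of_int (eps 3 4 3)) omega :: nat list \<Rightarrow> 'k)" by (rule stepL7[where e="-1", OF f_3_3_4]) (simp_all add: eps_simps)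
  have f_3_5_2: "Rel (word [3,5,2]) (vsc (of_int (eps 3 5 2)) omega :: nat list \<Rightarrow> 'k)" by (rule stepL7[where e="-1", OF f_3_3_4]) (simp_all add: eps_simps)
  have f_3_6_1: "Rel (word [3,6,1]) (vsc (of_int (eps 3 6 1)) omega :: nat list \<Rightarrow> 'k)" by (rule stepL7[where e="1", OF f_3_3_4]) (simp_all add: eps_simps)
  have f_3_1_7: "Rel (word [3,1,7]) (vsc (of_int (eps 3 1 7)) omega :: nat list \<Rightarrow> 'k)" by (rule stepL7[where e="1", OF f_3_3_5]) (simp_all add: eps_simps)
  have f_3_2_4: "Rel (word [3,2,4]) (vsc (of_int (eps 3 2 4)) omega :: nat list \<Rightarrow> 'k)" by (rule stepL7[where e="-1", OF f_3_3_5]) (simp_all add: eps_simps)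
  have f_3_4_2: "Rel (word [3,4,2]) (vsc (of_int (eps 3 4 2)) omega :: nat list \<Rightarrow> 'k)" by (rule stepL7[where e="1", OF f_3_3_5]) (simp_all add: eps_simps)
  have f_3_5_3: "Rel (word [3,5,3]) (vsc (of_int (eps 3 5 3)) omega :: nat list \<Rightarrow> 'k)" by (rule stepL7[where e="-1", OF f_3_3_5]) (simp_all add: eps_simps)
  have f_3_7_1: "Rel (word [3,7,1]) (vsc (of_int (eps 3 7 1)) omega :: nat list \<Rightarrow> 'k)" by (rule stepL7[where e="-1", OF f_3_3_5]) (simp_all add: eps_simps)
  have f_3_1_4: "Rel (word [3,1,4]) (vsc (of_int (eps 3 1 4)) omega :: nat list \<Rightarrow> 'k)" by (rule stepL7[where e="1", OF f_3_3_6]) (simp_all add: eps_simps)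
  have f_3_2_7: "Rel (word [3,2,7]) (vsc (of_int (eps 3 2 7)) omega :: nat list \<Rightarrow> 'k)" by (rule stepL7[where e="1", OF f_3_3_6]) (simp_all add: eps_simps)
  have f_3_4_1: "Rel (word [3,4,1]) (vsc (of_int (eps 3 4 1)) omega :: nat list \<Rightarrow> 'k)" by (rule stepL7[where e="-1", OF f_3_3_6]) (simp_all add: eps_simps)
  have f_3_6_3: "Rel (word [3,6,3]) (vsc (of_int (eps 3 6 3)) omega :: nat list \<Rightarrow> 'k)" by (rule stepL7[where e="-1", OF f_3_3_6]) (simp_all add: eps_simps)
  have f_3_7_2: "Rel (word [3,7,2]) (vsc (of_int (eps 3 7 2)) omega :: nat list \<Rightarrow> 'k)" by (rule stepL7[where e="-1", OF f_3_3_6]) (simp_all add: eps_simps)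
  have f_3_1_5: "Rel (word [3,1,5]) (vsc (of_int (eps 3 1 5)) omega :: nat list \<Rightarrow> 'k)" by (rule stepL7[where e="-1", OF f_3_3_7]) (simp_all add: eps_simps)
  have f_3_2_6: "Rel (word [3,2,6]) (vsc (of_int (eps 3 2 6)) omega :: nat list \<Rightarrow> 'k)" by (rule stepL7[where e="-1", OF f_3_3_7]) (simp_all add: eps_simps)
  have f_3_5_1: "Rel (word [3,5,1]) (vsc (of_int (eps 3 5 1)) omega :: nat list \<Rightarrow> 'k)" by (rule stepL7[where e="1", OF f_3_3_7]) (simp_all add: eps_simps)
  have f_3_6_2: "Rel (word [3,6,2]) (vsc (of_int (eps 3 6 2)) omega :: nat list \<Rightarrow> 'k)" by (rule stepL7[where e="1", OF f_3_3_7]) (simp_all add: eps_simps)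
  have f_3_7_3: "Rel (word [3,7,3]) (vsc (of_int (eps 3 7 3)) omega :: nat list \<Rightarrow> 'k)" by (rule stepL7[where e="-1", OF f_3_3_7]) (simp_all add: eps_simps)
  have f_4_3_4: "Rel (word [4,3,4]) (vsc (of_int (eps 4 3 4)) omega :: nat list \<Rightarrow> 'k)" by (rule stepR7[where e="-1", OF f_3_4_4]) (simp_all add: eps_simps)
  have f_5_2_4: "Rel (word [5,2,4]) (vsc (of_int (eps 5 2 4)) omega :: nat list \<Rightarrow> 'k)" by (rule stepR7[where e="-1", OF f_3_4_4]) (simp_all add: eps_simps)
  have f_6_1_4: "Rel (word [6,1,4]) (vsc (of_int (eps 6 1 4)) omega :: nat list \<Rightarrow> 'k)" by (rule stepR7[where e="1", OF f_3_4_4]) (simp_all add: eps_simps)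
  have f_4_2_5: "Rel (word [4,2,5]) (vsc (of_int (eps 4 2 5)) omega :: nat list \<Rightarrow> 'k)" by (rule stepR7[where e="1", OF f_3_5_5]) (simp_all add: eps_simps)
  have f_5_3_5: "Rel (word [5,3,5]) (vsc (of_int (eps 5 3 5)) omega :: nat list \<Rightarrow> 'k)" by (rule stepR7[where e="-1", OF f_3_5_5]) (simp_all add: eps_simps)
  have f_7_1_5: "Rel (word [7,1,5]) (vsc (of_int (eps 7 1 5)) omega :: nat list \<Rightarrow> 'k)" by (rule stepR7[where e="-1", OF f_3_5_5]) (simp_all add: eps_simps)
  have f_4_1_6: "Rel (word [4,1,6]) (vsc (of_int (eps 4 1 6)) omega :: nat list \<Rightarrow> 'k)" by (rule stepR7[where e="-1", OF f_3_6_6]) (simp_all add: eps_simps)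
  have f_6_3_6: "Rel (word [6,3,6]) (vsc (of_int (eps 6 3 6)) omega :: nat list \<Rightarrow> 'k)" by (rule stepR7[where e="-1", OF f_3_6_6]) (simp_all add: eps_simps)
  have f_7_2_6: "Rel (word [7,2,6]) (vsc (of_int (eps 7 2 6)) omega :: nat list \<Rightarrow> 'k)" by (rule stepR7[where e="-1", OF f_3_6_6]) (simp_all add: eps_simps)
  have f_5_1_7: "Rel (word [5,1,7]) (vsc (of_int (eps 5 1 7)) omega :: nat list \<Rightarrow> 'k)" by (rule stepR7[where e="1", OF f_3_7_7]) (simp_all add: eps_simps)
  have f_6_2_7: "Rel (word [6,2,7]) (vsc (of_int (eps 6 2 7)) omega :: nat list \<Rightarrow> 'k)" by (rule stepR7[where e="1", OF f_3_7_7]) (simp_all add: eps_simps)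
  have f_7_3_7: "Rel (word [7,3,7]) (vsc (of_int (eps 7 3 7)) omega :: nat list \<Rightarrow> 'k)" by (rule stepR7[where e="-1", OF f_3_7_7]) (simp_all add: eps_simps)
  have f_6_3_1: "Rel (word [6,3,1]) (vsc (of_int (eps 6 3 1)) omega :: nat list \<Rightarrow> 'k)" by (rule stepR7[where e="1", OF f_4_1_1]) (simp_all add: eps_simps)
  have f_7_2_1: "Rel (word [7,2,1]) (vsc (of_int (eps 7 2 1)) omega :: nat list \<Rightarrow> 'k)" by (rule stepR7[where e="1", OF f_4_1_1]) (simp_all add: eps_simps)
  have f_5_3_2: "Rel (word [5,3,2]) (vsc (of_int (eps 5 3 2)) omega :: nat list \<Rightarrow> 'k)" by (rule stepR7[where e="-1", OF f_4_2_2]) (simp_all add: eps_simps)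
  have f_7_1_2: "Rel (word [7,1,2]) (vsc (of_int (eps 7 1 2)) omega :: nat list \<Rightarrow> 'k)" by (rule stepR7[where e="-1", OF f_4_2_2]) (simp_all add: eps_simps)
  have f_5_2_3: "Rel (word [5,2,3]) (vsc (of_int (eps 5 2 3)) omega :: nat list \<Rightarrow> 'k)" by (rule stepR7[where e="1", OF f_4_3_3]) (simp_all add: eps_simps)
  have f_6_1_3: "Rel (word [6,1,3]) (vsc (of_int (eps 6 1 3)) omega :: nat list \<Rightarrow> 'k)" by (rule stepR7[where e="-1", OF f_4_3_3]) (simp_all add: eps_simps)
  have f_4_2_3: "Rel (word [4,2,3]) (vsc (of_int (eps 4 2 3)) omega :: nat list \<Rightarrow> 'k)" by (rule stepL7[where e="1", OF f_4_4_5]) (simp_all add: eps_simps)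
  have f_4_3_2: "Rel (word [4,3,2]) (vsc (of_int (eps 4 3 2)) omega :: nat list \<Rightarrow> 'k)" by (rule stepL7[where e="-1", OF f_4_4_5]) (simp_all add: eps_simps)
  have f_4_5_4: "Rel (word [4,5,4]) (vsc (of_int (eps 4 5 4)) omega :: nat list \<Rightarrow> 'k)" by (rule stepL7[where e="-1", OF f_4_4_5]) (simp_all add: eps_simps)
  have f_4_6_7: "Rel (word [4,6,7]) (vsc (of_int (eps 4 6 7)) omega :: nat list \<Rightarrow> 'k)" by (rule stepL7[where e="1", OF f_4_4_5]) (simp_all add: eps_simps)
  have f_4_7_6: "Rel (word [4,7,6]) (vsc (of_int (eps 4 7 6)) omega :: nat list \<Rightarrow> 'k)" by (rule stepL7[where e="-1", OF f_4_4_5]) (simp_all add: eps_simps)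
  have f_4_1_3: "Rel (word [4,1,3]) (vsc (of_int (eps 4 1 3)) omega :: nat list \<Rightarrow> 'k)" by (rule stepL7[where e="-1", OF f_4_4_6]) (simp_all add: eps_simps)
  have f_4_3_1: "Rel (word [4,3,1]) (vsc (of_int (eps 4 3 1)) omega :: nat list \<Rightarrow> 'k)" by (rule stepL7[where e="1", OF f_4_4_6]) (simp_all add: eps_simps)
  have f_4_5_7: "Rel (word [4,5,7]) (vsc (of_int (eps 4 5 7)) omega :: nat list \<Rightarrow> 'k)" by (rule stepL7[where e="-1", OF f_4_4_6]) (simp_all add: eps_simps)
  have f_4_6_4: "Rel (word [4,6,4]) (vsc (of_int (eps 4 6 4)) omega :: nat list \<Rightarrow> 'k)" by (rule stepL7[where e="-1", OF f_4_4_6]) (simp_all add: eps_simps)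
  have f_4_7_5: "Rel (word [4,7,5]) (vsc (of_int (eps 4 7 5)) omega :: nat list \<Rightarrow> 'k)" by (rule stepL7[where e="1", OF f_4_4_6]) (simp_all add: eps_simps)
  have f_4_1_2: "Rel (word [4,1,2]) (vsc (of_int (eps 4 1 2)) omega :: nat list \<Rightarrow> 'k)" by (rule stepL7[where e="-1", OF f_4_4_7]) (simp_all add: eps_simps)
  have f_4_2_1: "Rel (word [4,2,1]) (vsc (of_int (eps 4 2 1)) omega :: nat list \<Rightarrow> 'k)" by (rule stepL7[where e="1", OF f_4_4_7]) (simp_all add: eps_simps)
  have f_4_5_6: "Rel (word [4,5,6]) (vsc (of_int (eps 4 5 6)) omega :: nat list \<Rightarrow> 'k)" by (rule stepL7[where e="1", OF f_4_4_7]) (simp_all add: eps_simps)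
  have f_4_6_5: "Rel (word [4,6,5]) (vsc (of_int (eps 4 6 5)) omega :: nat list \<Rightarrow> 'k)" by (rule stepL7[where e="-1", OF f_4_4_7]) (simp_all add: eps_simps)
  have f_4_7_4: "Rel (word [4,7,4]) (vsc (of_int (eps 4 7 4)) omega :: nat list \<Rightarrow> 'k)" by (rule stepL7[where e="-1", OF f_4_4_7]) (simp_all add: eps_simps)
  have f_5_4_5: "Rel (word [5,4,5]) (vsc (of_int (eps 5 4 5)) omega :: nat list \<Rightarrow> 'k)" by (rule stepR7[where e="-1", OF f_4_5_5]) (simp_all add: eps_simps)
  have f_6_7_5: "Rel (word [6,7,5]) (vsc (of_int (eps 6 7 5)) omega :: nat list \<Rightarrow> 'k)" by (rule stepR7[where e="1", OF f_4_5_5]) (simp_all add: eps_simps)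
  have f_7_6_5: "Rel (word [7,6,5]) (vsc (of_int (eps 7 6 5)) omega :: nat list \<Rightarrow> 'k)" by (rule stepR7[where e="-1", OF f_4_5_5]) (simp_all add: eps_simps)
  have f_5_7_6: "Rel (word [5,7,6]) (vsc (of_int (eps 5 7 6)) omega :: nat list \<Rightarrow> 'k)" by (rule stepR7[where e="-1", OF f_4_6_6]) (simp_all add: eps_simps)
  have f_6_4_6: "Rel (word [6,4,6]) (vsc (of_int (eps 6 4 6)) omega :: nat list \<Rightarrow> 'k)" by (rule stepR7[where e="-1", OF f_4_6_6]) (simp_all add: eps_simps)
  have f_7_5_6: "Rel (word [7,5,6]) (vsc (of_int (eps 7 5 6)) omega :: nat list \<Rightarrow> 'k)" by (rule stepR7[where e="1", OF f_4_6_6]) (simp_all add: eps_simps)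
  have f_5_6_7: "Rel (word [5,6,7]) (vsc (of_int (eps 5 6 7)) omega :: nat list \<Rightarrow> 'k)" by (rule stepR7[where e="1", OF f_4_7_7]) (simp_all add: eps_simps)
  have f_6_5_7: "Rel (word [6,5,7]) (vsc (of_int (eps 6 5 7)) omega :: nat list \<Rightarrow> 'k)" by (rule stepR7[where e="-1", OF f_4_7_7]) (simp_all add: eps_simps)
  have f_7_4_7: "Rel (word [7,4,7]) (vsc (of_int (eps 7 4 7)) omega :: nat list \<Rightarrow> 'k)" by (rule stepR7[where e="-1", OF f_4_7_7]) (simp_all add: eps_simps)
  have f_6_2_1: "Rel (word [6,2,1]) (vsc (of_int (eps 6 2 1)) omega :: nat list \<Rightarrow> 'k)" by (rule stepR7[where e="1", OF f_5_1_1]) (simp_all add: eps_simps)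
  have f_7_3_1: "Rel (word [7,3,1]) (vsc (of_int (eps 7 3 1)) omega :: nat list \<Rightarrow> 'k)" by (rule stepR7[where e="-1", OF f_5_1_1]) (simp_all add: eps_simps)
  have f_6_1_2: "Rel (word [6,1,2]) (vsc (of_int (eps 6 1 2)) omega :: nat list \<Rightarrow> 'k)" by (rule stepR7[where e="-1", OF f_5_2_2]) (simp_all add: eps_simps)
  have f_7_1_3: "Rel (word [7,1,3]) (vsc (of_int (eps 7 1 3)) omega :: nat list \<Rightarrow> 'k)" by (rule stepR7[where e="1", OF f_5_3_3]) (simp_all add: eps_simps)
  have f_6_7_4: "Rel (word [6,7,4]) (vsc (of_int (eps 6 7 4)) omega :: nat list \<Rightarrow> 'k)" by (rule stepR7[where e="-1", OF f_5_4_4]) (simp_all add: eps_simps)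
  have f_7_6_4: "Rel (word [7,6,4]) (vsc (of_int (eps 7 6 4)) omega :: nat list \<Rightarrow> 'k)" by (rule stepR7[where e="1", OF f_5_4_4]) (simp_all add: eps_simps)
  have f_5_1_2: "Rel (word [5,1,2]) (vsc (of_int (eps 5 1 2)) omega :: nat list \<Rightarrow> 'k)" by (rule stepL7[where e="-1", OF f_5_5_6]) (simp_all add: eps_simps)
  have f_5_2_1: "Rel (word [5,2,1]) (vsc (of_int (eps 5 2 1)) omega :: nat list \<Rightarrow> 'k)" by (rule stepL7[where e="1", OF f_5_5_6]) (simp_all add: eps_simps)
  have f_5_4_7: "Rel (word [5,4,7]) (vsc (of_int (eps 5 4 7)) omega :: nat list \<Rightarrow> 'k)" by (rule stepL7[where e="1", OF f_5_5_6]) (simp_all add: eps_simps)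
  have f_5_6_5: "Rel (word [5,6,5]) (vsc (of_int (eps 5 6 5)) omega :: nat list \<Rightarrow> 'k)" by (rule stepL7[where e="-1", OF f_5_5_6]) (simp_all add: eps_simps)
  have f_5_7_4: "Rel (word [5,7,4]) (vsc (of_int (eps 5 7 4)) omega :: nat list \<Rightarrow> 'k)" by (rule stepL7[where e="-1", OF f_5_5_6]) (simp_all add: eps_simps)
  have f_5_1_3: "Rel (word [5,1,3]) (vsc (of_int (eps 5 1 3)) omega :: nat list \<Rightarrow> 'k)" by (rule stepL7[where e="1", OF f_5_5_7]) (simp_all add: eps_simps)
  have f_5_3_1: "Rel (word [5,3,1]) (vsc (of_int (eps 5 3 1)) omega :: nat list \<Rightarrow> 'k)" by (rule stepL7[where e="-1", OF f_5_5_7]) (simp_all add: eps_simps)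
  have f_5_4_6: "Rel (word [5,4,6]) (vsc (of_int (eps 5 4 6)) omega :: nat list \<Rightarrow> 'k)" by (rule stepL7[where e="-1", OF f_5_5_7]) (simp_all add: eps_simps)
  have f_5_6_4: "Rel (word [5,6,4]) (vsc (of_int (eps 5 6 4)) omega :: nat list \<Rightarrow> 'k)" by (rule stepL7[where e="1", OF f_5_5_7]) (simp_all add: eps_simps)
  have f_5_7_5: "Rel (word [5,7,5]) (vsc (of_int (eps 5 7 5)) omega :: nat list \<Rightarrow> 'k)" by (rule stepL7[where e="-1", OF f_5_5_7]) (simp_all add: eps_simps)
  have f_6_5_6: "Rel (word [6,5,6]) (vsc (of_int (eps 6 5 6)) omega :: nat list \<Rightarrow> 'k)" by (rule stepR7[where e="-1", OF f_5_6_6]) (simp_all add: eps_simps)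
  have f_7_4_6: "Rel (word [7,4,6]) (vsc (of_int (eps 7 4 6)) omega :: nat list \<Rightarrow> 'k)" by (rule stepR7[where e="-1", OF f_5_6_6]) (simp_all add: eps_simps)
  have f_6_4_7: "Rel (word [6,4,7]) (vsc (of_int (eps 6 4 7)) omega :: nat list \<Rightarrow> 'k)" by (rule stepR7[where e="1", OF f_5_7_7]) (simp_all add: eps_simps)
  have f_7_5_7: "Rel (word [7,5,7]) (vsc (of_int (eps 7 5 7)) omega :: nat list \<Rightarrow> 'k)" by (rule stepR7[where e="-1", OF f_5_7_7]) (simp_all add: eps_simps)
  have f_7_3_2: "Rel (word [7,3,2]) (vsc (of_int (eps 7 3 2)) omega :: nat list \<Rightarrow> 'k)" by (rule stepR7[where e="-1", OF f_6_2_2]) (simp_all add: eps_simps)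
  have f_7_2_3: "Rel (word [7,2,3]) (vsc (of_int (eps 7 2 3)) omega :: nat list \<Rightarrow> 'k)" by (rule stepR7[where e="1", OF f_6_3_3]) (simp_all add: eps_simps)
  have f_7_5_4: "Rel (word [7,5,4]) (vsc (of_int (eps 7 5 4)) omega :: nat list \<Rightarrow> 'k)" by (rule stepR7[where e="-1", OF f_6_4_4]) (simp_all add: eps_simps)
  have f_7_4_5: "Rel (word [7,4,5]) (vsc (of_int (eps 7 4 5)) omega :: nat list \<Rightarrow> 'k)" by (rule stepR7[where e="1", OF f_6_5_5]) (simp_all add: eps_simps)
  have f_6_2_3: "Rel (word [6,2,3]) (vsc (of_int (eps 6 2 3)) omega :: nat list \<Rightarrow> 'k)" by (rule stepL7[where e="1", OF f_6_6_7]) (simp_all add: eps_simps)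
  have f_6_3_2: "Rel (word [6,3,2]) (vsc (of_int (eps 6 3 2)) omega :: nat list \<Rightarrow> 'k)" by (rule stepL7[where e="-1", OF f_6_6_7]) (simp_all add: eps_simps)
  have f_6_4_5: "Rel (word [6,4,5]) (vsc (of_int (eps 6 4 5)) omega :: nat list \<Rightarrow> 'k)" by (rule stepL7[where e="1", OF f_6_6_7]) (simp_all add: eps_simps)
  have f_6_5_4: "Rel (word [6,5,4]) (vsc (of_int (eps 6 5 4)) omega :: nat list \<Rightarrow> 'k)" by (rule stepL7[where e="-1", OF f_6_6_7]) (simp_all add: eps_simps)
  have f_6_7_6: "Rel (word [6,7,6]) (vsc (of_int (eps 6 7 6)) omega :: nat list \<Rightarrow> 'k)" by (rule stepL7[where e="-1", OF f_6_6_7]) (simp_all add: eps_simps)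
  have f_7_6_7: "Rel (word [7,6,7]) (vsc (of_int (eps 7 6 7)) omega :: nat list \<Rightarrow> 'k)" by (rule stepR7[where e="-1", OF f_6_7_7]) (simp_all add: eps_simps)
  have f_2_3_1: "Rel (word [2,3,1]) (vsc (of_int (eps 2 3 1)) omega :: nat list \<Rightarrow> 'k)" by (rule stepL7[where e="-1", OF f_2_1_3]) (simp_all add: eps_simps)
  have f_2_4_6: "Rel (word [2,4,6]) (vsc (of_int (eps 2 4 6)) omega :: nat list \<Rightarrow> 'k)" by (rule stepL7[where e="-1", OF f_2_1_3]) (simp_all add: eps_simps)
  have f_2_5_7: "Rel (word [2,5,7]) (vsc (of_int (eps 2 5 7)) omega :: nat list \<Rightarrow> 'k)" by (rule stepL7[where e="1", OF f_2_1_3]) (simp_all add: eps_simps)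
  have f_2_6_4: "Rel (word [2,6,4]) (vsc (of_int (eps 2 6 4)) omega :: nat list \<Rightarrow> 'k)" by (rule stepL7[where e="1", OF f_2_1_3]) (simp_all add: eps_simps)
  have f_2_7_5: "Rel (word [2,7,5]) (vsc (of_int (eps 2 7 5)) omega :: nat list \<Rightarrow> 'k)" by (rule stepL7[where e="-1", OF f_2_1_3]) (simp_all add: eps_simps)
  have f_4_1_5: "Rel (word [4,1,5]) (vsc (of_int (eps 4 1 5)) omega :: nat list \<Rightarrow> 'k)" by (rule stepL7[where e="1", OF f_4_7_3]) (simp_all add: eps_simps)
  have f_4_2_6: "Rel (word [4,2,6]) (vsc (of_int (eps 4 2 6)) omega :: nat list \<Rightarrow> 'k)" by (rule stepL7[where e="1", OF f_4_7_3]) (simp_all add: eps_simps)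
  have f_4_3_7: "Rel (word [4,3,7]) (vsc (of_int (eps 4 3 7)) omega :: nat list \<Rightarrow> 'k)" by (rule stepL7[where e="-1", OF f_4_7_3]) (simp_all add: eps_simps)
  have f_4_5_1: "Rel (word [4,5,1]) (vsc (of_int (eps 4 5 1)) omega :: nat list \<Rightarrow> 'k)" by (rule stepL7[where e="-1", OF f_4_7_3]) (simp_all add: eps_simps)
  have f_4_6_2: "Rel (word [4,6,2]) (vsc (of_int (eps 4 6 2)) omega :: nat list \<Rightarrow> 'k)" by (rule stepL7[where e="-1", OF f_4_7_3]) (simp_all add: eps_simps)
  have f_5_1_4: "Rel (word [5,1,4]) (vsc (of_int (eps 5 1 4)) omega :: nat list \<Rightarrow> 'k)" by (rule stepL7[where e="-1", OF f_5_6_3]) (simp_all add: eps_simps)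
  have f_5_2_7: "Rel (word [5,2,7]) (vsc (of_int (eps 5 2 7)) omega :: nat list \<Rightarrow> 'k)" by (rule stepL7[where e="-1", OF f_5_6_3]) (simp_all add: eps_simps)
  have f_5_3_6: "Rel (word [5,3,6]) (vsc (of_int (eps 5 3 6)) omega :: nat list \<Rightarrow> 'k)" by (rule stepL7[where e="-1", OF f_5_6_3]) (simp_all add: eps_simps)
  have f_5_4_1: "Rel (word [5,4,1]) (vsc (of_int (eps 5 4 1)) omega :: nat list \<Rightarrow> 'k)" by (rule stepL7[where e="1", OF f_5_6_3]) (simp_all add: eps_simps)
  have f_5_7_2: "Rel (word [5,7,2]) (vsc (of_int (eps 5 7 2)) omega :: nat list \<Rightarrow> 'k)" by (rule stepL7[where e="1", OF f_5_6_3]) (simp_all add: eps_simps)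
  have f_6_1_7: "Rel (word [6,1,7]) (vsc (of_int (eps 6 1 7)) omega :: nat list \<Rightarrow> 'k)" by (rule stepL7[where e="-1", OF f_6_5_3]) (simp_all add: eps_simps)
  have f_6_2_4: "Rel (word [6,2,4]) (vsc (of_int (eps 6 2 4)) omega :: nat list \<Rightarrow> 'k)" by (rule stepL7[where e="1", OF f_6_5_3]) (simp_all add: eps_simps)
  have f_6_3_5: "Rel (word [6,3,5]) (vsc (of_int (eps 6 3 5)) omega :: nat list \<Rightarrow> 'k)" by (rule stepL7[where e="-1", OF f_6_5_3]) (simp_all add: eps_simps)
  have f_6_4_2: "Rel (word [6,4,2]) (vsc (of_int (eps 6 4 2)) omega :: nat list \<Rightarrow> 'k)" by (rule stepL7[where e="-1", OF f_6_5_3]) (simp_all add: eps_simps)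
  have f_6_7_1: "Rel (word [6,7,1]) (vsc (of_int (eps 6 7 1)) omega :: nat list \<Rightarrow> 'k)" by (rule stepL7[where e="1", OF f_6_5_3]) (simp_all add: eps_simps)
  have f_7_1_6: "Rel (word [7,1,6]) (vsc (of_int (eps 7 1 6)) omega :: nat list \<Rightarrow> 'k)" by (rule stepL7[where e="1", OF f_7_4_3]) (simp_all add: eps_simps)
  have f_7_2_5: "Rel (word [7,2,5]) (vsc (of_int (eps 7 2 5)) omega :: nat list \<Rightarrow> 'k)" by (rule stepL7[where e="-1", OF f_7_4_3]) (simp_all add: eps_simps)
  have f_7_3_4: "Rel (word [7,3,4]) (vsc (of_int (eps 7 3 4)) omega :: nat list \<Rightarrow> 'k)" by (rule stepL7[where e="-1", OF f_7_4_3]) (simp_all add: eps_simps)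
  have f_7_5_2: "Rel (word [7,5,2]) (vsc (of_int (eps 7 5 2)) omega :: nat list \<Rightarrow> 'k)" by (rule stepL7[where e="1", OF f_7_4_3]) (simp_all add: eps_simps)
  have f_7_6_1: "Rel (word [7,6,1]) (vsc (of_int (eps 7 6 1)) omega :: nat list \<Rightarrow> 'k)" by (rule stepL7[where e="-1", OF f_7_4_3]) (simp_all add: eps_simps)
  have f_3_1_2: "Rel (word [3,1,2]) (vsc (of_int (eps 3 1 2)) omega :: nat list \<Rightarrow> 'k)" by (rule stepR7[where e="-1", OF f_1_3_2]) (simp_all add: eps_simps)
  have f_3_6_5: "Rel (word [3,6,5]) (vsc (of_int (eps 3 6 5)) omega :: nat list \<Rightarrow> 'k)" by (rule stepR7[where e="1", OF f_1_4_5]) (simp_all add: eps_simps)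
  have f_3_7_4: "Rel (word [3,7,4]) (vsc (of_int (eps 3 7 4)) omega :: nat list \<Rightarrow> 'k)" by (rule stepR7[where e="-1", OF f_1_5_4]) (simp_all add: eps_simps)
  have f_3_4_7: "Rel (word [3,4,7]) (vsc (of_int (eps 3 4 7)) omega :: nat list \<Rightarrow> 'k)" by (rule stepR7[where e="-1", OF f_1_6_7]) (simp_all add: eps_simps)
  have f_3_5_6: "Rel (word [3,5,6]) (vsc (of_int (eps 3 5 6)) omega :: nat list \<Rightarrow> 'k)" by (rule stepR7[where e="1", OF f_1_7_6]) (simp_all add: eps_simps)
  have f_3_2_1: "Rel (word [3,2,1]) (vsc (of_int (eps 3 2 1)) omega :: nat list \<Rightarrow> 'k)" by (rule stepR7[where e="-1", OF f_2_3_1]) (simp_all add: eps_simps)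
  show ?thesis unfolding set7 by (simp only: ball_simps insert_iff empty_iff) (intro conjI; simp only: f_1_1_1 f_1_1_2 f_1_1_3 f_1_1_4 f_1_1_5 f_1_1_6 f_1_1_7 f_1_2_1 f_1_2_2 f_1_2_3 f_1_2_4 f_1_2_5 f_1_2_6 f_1_2_7 f_1_3_1 f_1_3_2 f_1_3_3 f_1_3_4 f_1_3_5 f_1_3_6 f_1_3_7 f_1_4_1 f_1_4_2 f_1_4_3 f_1_4_4 f_1_4_5 f_1_4_6 f_1_4_7 f_1_5_1 f_1_5_2 f_1_5_3 f_1_5_4 f_1_5_5 f_1_5_6 f_1_5_7 f_1_6_1 f_1_6_2 f_1_6_3 f_1_6_4 f_1_6_5 f_1_6_6 f_1_6_7 f_1_7_1 f_1_7_2 f_1_7_3 f_1_7_4 f_1_7_5 f_1_7_6 f_1_7_7 f_2_1_1 f_2_1_2 f_2_1_3 f_2_1_4 f_2_1_5 f_2_1_6 f_2_1_7 f_2_2_1 f_2_2_2 f_2_2_3 f_2_2_4 f_2_2_5 f_2_2_6 f_2_2_7 f_2_3_1 f_2_3_2 f_2_3_3 f_2_3_4 f_2_3_5 f_2_3_6 f_2_3_7 f_2_4_1 f_2_4_2 f_2_4_3 f_2_4_4 f_2_4_5 f_2_4_6 f_2_4_7 f_2_5_1 f_2_5_2 f_2_5_3 f_2_5_4 f_2_5_5 f_2_5_6 f_2_5_7 f_2_6_1 f_2_6_2 f_2_6_3 f_2_6_4 f_2_6_5 f_2_6_6 f_2_6_7 f_2_7_1 f_2_7_2 f_2_7_3 f_2_7_4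 f_2_7_5 f_2_7_6 f_2_7_7 f_3_1_1 f_3_1_2 f_3_1_3 f_3_1_4 f_3_1_5 f_3_1_6 f_3_1_7 f_3_2_1 f_3_2_2 f_3_2_3 f_3_2_4 f_3_2_5 f_3_2_6 f_3_2_7 f_3_3_1 f_3_3_2 f_3_3_3 f_3_3_4 f_3_3_5 f_3_3_6 f_3_3_7 f_3_4_1 f_3_4_2 f_3_4_3 f_3_4_4 f_3_4_5 f_3_4_6 f_3_4_7 f_3_5_1 f_3_5_2 f_3_5_3 f_3_5_4 f_3_5_5 f_3_5_6 f_3_5_7 f_3_6_1 f_3_6_2 f_3_6_3 f_3_6_4 f_3_6_5 f_3_6_6 f_3_6_7 f_3_7_1 f_3_7_2 f_3_7_3 f_3_7_4 f_3_7_5 f_3_7_6 f_3_7_7 f_4_1_1 f_4_1_2 f_4_1_3 f_4_1_4 f_4_1_5 f_4_1_6 f_4_1_7 f_4_2_1 f_4_2_2 f_4_2_3 f_4_2_4 f_4_2_5 f_4_2_6 f_4_2_7 f_4_3_1 f_4_3_2 f_4_3_3 f_4_3_4 f_4_3_5 f_4_3_6 f_4_3_7 f_4_4_1 f_4_4_2 f_4_4_3 f_4_4_4 f_4_4_5 f_4_4_6 f_4_4_7 f_4_5_1 f_4_5_2 f_4_5_3 f_4_5_4 f_4_5_5 f_4_5_6 f_4_5_7 f_4_6_1 f_4_6_2 f_4_6_3 f_4_6_4 f_4_6_5 f_4_6_6 f_4_6_7 f_4_7_1 f_4_7_2 f_4_7_3 f_4_7_4 f_4_7_5 f_4_7_6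 f_4_7_7 f_5_1_1 f_5_1_2 f_5_1_3 f_5_1_4 f_5_1_5 f_5_1_6 f_5_1_7 f_5_2_1 f_5_2_2 f_5_2_3 f_5_2_4 f_5_2_5 f_5_2_6 f_5_2_7 f_5_3_1 f_5_3_2 f_5_3_3 f_5_3_4 f_5_3_5 f_5_3_6 f_5_3_7 f_5_4_1 f_5_4_2 f_5_4_3 f_5_4_4 f_5_4_5 f_5_4_6 f_5_4_7 f_5_5_1 f_5_5_2 f_5_5_3 f_5_5_4 f_5_5_5 f_5_5_6 f_5_5_7 f_5_6_1 f_5_6_2 f_5_6_3 f_5_6_4 f_5_6_5 f_5_6_6 f_5_6_7 f_5_7_1 f_5_7_2 f_5_7_3 f_5_7_4 f_5_7_5 f_5_7_6 f_5_7_7 f_6_1_1 f_6_1_2 f_6_1_3 f_6_1_4 f_6_1_5 f_6_1_6 f_6_1_7 f_6_2_1 f_6_2_2 f_6_2_3 f_6_2_4 f_6_2_5 f_6_2_6 f_6_2_7 f_6_3_1 f_6_3_2 f_6_3_3 f_6_3_4 f_6_3_5 f_6_3_6 f_6_3_7 f_6_4_1 f_6_4_2 f_6_4_3 f_6_4_4 f_6_4_5 f_6_4_6 f_6_4_7 f_6_5_1 f_6_5_2 f_6_5_3 f_6_5_4 f_6_5_5 f_6_5_6 f_6_5_7 f_6_6_1 f_6_6_2 f_6_6_3 f_6_6_4 f_6_6_5 f_6_6_6 f_6_6_7 f_6_7_1 f_6_7_2 f_6_7_3 f_6_7_4 f_6_7_5 f_6_7_6 f_6_7_7 f_7_1_1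 f_7_1_2 f_7_1_3 f_7_1_4 f_7_1_5 f_7_1_6 f_7_1_7 f_7_2_1 f_7_2_2 f_7_2_3 f_7_2_4 f_7_2_5 f_7_2_6 f_7_2_7 f_7_3_1 f_7_3_2 f_7_3_3 f_7_3_4 f_7_3_5 f_7_3_6 f_7_3_7 f_7_4_1 f_7_4_2 f_7_4_3 f_7_4_4 f_7_4_5 f_7_4_6 f_7_4_7 f_7_5_1 f_7_5_2 f_7_5_3 f_7_5_4 f_7_5_5 f_7_5_6 f_7_5_7 f_7_6_1 f_7_6_2 f_7_6_3 f_7_6_4 f_7_6_5 f_7_6_6 f_7_6_7 f_7_7_1 f_7_7_2 f_7_7_3 f_7_7_4 f_7_7_5 f_7_7_6 f_7_7_7)
qed



definition phi3 :: "(nat list \<Rightarrow> 'k::field) \<Rightarrow> 'k" where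
  "phi3 x = (\<Sum>r=1..7. \<Sum>s=1..7. \<Sum>i=1..7. of_int (eps r s i) * x [r,s,i])"

lemma tm0: "tmul f g [] = f [] * g []" by (rule tmul_Nil)
lemma tm1: "tmul f g [r] = f [] * g [r] + f [r] * g []"
  by (simp add: tmul_Cons tmul_Nil shft_def)
lemma tm2: "tmul f g [r,s] = f [] * g [r,s] + f [r] * g [s] + f [r,s] * g []"
  by (simp add: tmul_Cons tmul_Nil shft_def)
lemma tm3: "tmul f g [r,s,i] = f [] * g [r,s,i] + f [r] * g [s,i] + f [r,s] * g [i] + f [r,s,i] * g []"
  by (simp add: tmul_Cons tmul_Nil shft_def)

lemma phi3_vadd: "phi3 (vadd f g) = phi3 f + phi3 g"
  by (simp add: phi3_def vadd_def distrib_left sum.distrib)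
lemma phi3_vsc: "phi3 (vsc c f) = c * phi3 f"
  by (simp add: phi3_def vsc_def sum_distrib_left mult.left_commute)
lemma phi3_zero: "phi3 (\<lambda>_. 0) = 0"
  by (simp add: phi3_def)

lemma sum3_rot: "(\<Sum>r\<in>A. \<Sum>s\<in>B. \<Sum>i\<in>C. F r s i) = (\<Sum>i\<in>C. \<Sum>r\<in>A. \<Sum>s\<in>B. F r s i)"
proof -
  have "(\<Sum>r\<in>A. \<Sum>s\<in>B. \<Sum>i\<in>C. F r s i) = (\<Sum>r\<in>A. \<Sum>i\<in>C. \<Sum>s\<in>B. F r s i)"
    by (rule sum.cong[OF refl], rule sum.swap)
  also have "\<dots> = (\<Sum>i\<in>C. \<Sum>r\<in>A. \<Sum>s\<in>B. F r s i)" by (rule sum.swap)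
  finally show ?thesis .
qed

lemma cyc_sum: "(\<Sum>r=1..7. \<Sum>s=1..7. \<Sum>i=1..7. of_int (eps r s i) * (P r s * Q i)) =
   (\<Sum>r=1..7. \<Sum>s=1..7. \<Sum>i=1..7. of_int (eps r s i) * (Q r * P s i) :: 'k::field)"
proof -
  have "(\<Sum>r=1..7. \<Sum>s=1..7. \<Sum>i=1..7. of_int (eps r s i) * (P r s * Q i)) =
        (\<Sum>i=1..7. \<Sum>r=1..7. \<Sum>s=1..7. of_int (eps r s i) * (P r s * Q i) :: 'k)"
    by (rule sum3_rot)
  also have "\<dots> = (\<Sum>i=1..7. \<Sum>r=1..7. \<Sum>s=1..7. of_int (eps i r s) * (Q i * P r s))"
    by (intro sum.cong refl) (metis eps_cyc mult.commute)
  finally show ?thesis .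
qed

lemma cyc_zero: assumes "\<And>r. r \<in> {1..7} \<Longrightarrow> (\<Sum>s=1..7. \<Sum>i=1..7. of_int (eps r s i) * P s i) = (0::'k::field)"
  shows "(\<Sum>r=1..7. \<Sum>s=1..7. \<Sum>i=1..7. of_int (eps r s i) * (Q r * P s i)) = (0::'k)"
proof -
  have "(\<Sum>r=1..7. \<Sum>s=1..7. \<Sum>i=1..7. of_int (eps r s i) * (Q r * P s i)) =
        (\<Sum>r=1..7. Q r * (\<Sum>s=1..7. \<Sum>i=1..7. of_int (eps r s i) * P s i))"
    by (simp add: sum_distrib_left mult.left_commute)
  also have "\<dots> = 0" using assms by simp
  finally show ?thesis .
qed

lemma phi3_tmul: "phi3 (tmul a y) = (\<Sum>r=1..7. \<Sum>s=1..7. \<Sum>i=1..7. of_int (eps r s i) *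
    (a [] * y [r,s,i] + a [r] * y [s,i] + a [r,s] * y [i] + a [r,s,i] * y []))"
  by (simp add: phi3_def tm3)

lemma phi3_trace: "phi3 (tmul a y) = phi3 (tmul y a)"
proof -
  let ?S = "\<lambda>F. (\<Sum>r=1..7. \<Sum>s=1..7. \<Sum>i=1..7. of_int (eps r s i) * F r s i)"
  have split: "\<And>a y. phi3 (tmul a y) = ?S (\<lambda>r s i. a [] * y [r,s,i]) + ?S (\<lambda>r s i. a [r] * y [s,i])
        + ?S (\<lambda>r s i. a [r,s] * y [i]) + ?S (\<lambda>r s i. a [r,s,i] * y [])"
    by (simp add: phi3_tmul distrib_left sum.distrib)
  have c1: "?S (\<lambda>r s i. a [r] * y [s,i]) = ?S (\<lambda>r s i. y [r,s] * a [i])"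
    using cyc_sum[of "\<lambda>r s. y [r,s]" "\<lambda>i. a [i]"] by (simp add: mult.commute)
  have c2: "?S (\<lambda>r s i. a [r,s] * y [i]) = ?S (\<lambda>r s i. y [r] * a [s,i])"
    using cyc_sum[of "\<lambda>r s. a [r,s]" "\<lambda>i. y [i]"] by simp
  show ?thesis unfolding split[of a y] split[of y a] c1 c2
    by (simp add: mult.commute add_ac)
qed

lemma Rperp_sum: "s \<in> Rperp \<Longrightarrow> r \<in> {1..7} \<Longrightarrow> (\<Sum>m=1..7. \<Sum>n=1..7. of_int (eps r m n) * s [m,n]) = 0"
  by (simp add: Rperp_def)

lemma phi3_gen: assumes "s \<in> Rperp" shows "phi3 (tmul (tmul a s) b) = 0"
proof -
  have s0: "s [] = 0" "\<And>r. s [r] = 0" "\<And>r t i. s [r,t,i] = 0"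
    using assms by (auto simp: Rperp_def thom_def)
  let ?S = "\<lambda>F. (\<Sum>r=1..7. \<Sum>s=1..7. \<Sum>i=1..7. of_int (eps r s i) * F r s i)"
  have "phi3 (tmul (tmul a s) b) = ?S (\<lambda>r t i. (a [] * s [r,t]) * b [i]) + ?S (\<lambda>r t i. b [] * a [r] * s [t,i])"
    by (simp add: phi3_tmul tm0 tm1 tm2 tm3 s0 distrib_left sum.distrib mult.commute mult.left_commute)
  also have "?S (\<lambda>r t i. (a [] * s [r,t]) * b [i]) = ?S (\<lambda>r t i. b [r] * (a [] * s [t,i]))"
    by (rule cyc_sum)
  also have "\<dots> = 0"
    using Rperp_sum[OF assms] by (intro cyc_zero) (simp add: sum_distrib_left[symmetric] mult.left_commute)
  also have "?S (\<lambda>r t i. b [] * a [r] * s [t,i]) = 0"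
    by (rule cyc_zero[where Q="\<lambda>r. b [] * a [r]" and P = "\<lambda>t i. s [t,i]"]) (rule Rperp_sum[OF assms])
  finally show ?thesis by simp
qed

lemma phi3_ideal: "x \<in> dual_ideal \<Longrightarrow> phi3 x = 0"
  by (induction rule: dual_ideal.induct) (simp_all add: phi3_zero phi3_gen phi3_vadd phi3_vsc)

lemma phi2_vadd: "phi2 (vadd f g) = vadd (phi2 f) (phi2 g)"
  by (simp add: phi2_def vadd_def distrib_left sum.distrib fun_eq_iff)
lemma phi2_vsc: "phi2 (vsc c f) = vsc c (phi2 f)"
  by (simp add: phi2_def vsc_def sum_distrib_left mult.left_commute fun_eq_iff)

lemma phi2_gen: assumes "s \<in> Rperp" shows "phi2 (tmul (tmul a s) b) = (\<lambda>_. 0)"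
proof -
  have s0: "s [] = 0" "\<And>r. s [r] = 0"
    using assms by (auto simp: Rperp_def thom_def)
  have "phi2 (tmul (tmul a s) b) = vsc (a [] * b []) (phi2 s)"
    by (simp add: phi2_def vsc_def fun_eq_iff tm0 tm1 tm2 s0 sum_distrib_left mult_ac)
  then show ?thesis using assms by (simp add: Rperp_iff vsc_def)
qed

lemma phi2_ideal: "x \<in> dual_ideal \<Longrightarrow> phi2 x = (\<lambda>_. 0)"
  by (induction rule: dual_ideal.induct) (simp_all add: phi2_gen phi2_vadd phi2_vsc, simp_all add: phi2_def vadd_def vsc_def fun_eq_iff)



declare qw.simps[simp del]

lemma word3_eval: "word [a,b,c] [p,q,r] = (if p = a then 1 else 0) * (if q = b then 1 else 0) * (if r = c then (1::'a::field) else 0)"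
  by (simp add: word_def)

lemma word_sym: "word u v = word v u" by (simp add: word_def)

lemma word_inj: "word u = (word v :: nat list \<Rightarrow> 'k::field) \<Longrightarrow> u = v"
  by (drule fun_cong[of _ _ u]) (simp add: word_def split: if_splits)

lemma sum_word1: "a \<in> {1..7} \<Longrightarrow> (\<Sum>p=1..7. f p * word [a] [p]) = (f a :: 'k::field)"
proof -
  assume a: "a \<in> {1..7}"
  have "(\<Sum>p=1..7. f p * word [a] [p]) = (\<Sum>p=1..7. f p * (if p = a then 1 else 0))"
    by (simp add: word_def)
  also have "\<dots> = f a" using a by (simp only: sum_delta_r finite_atLeastAtMost if_True)
  finally show ?thesis .
qed

lemma sum_word3: "a \<in> {1..7} \<Longrightarrow> b \<in> {1..7} \<Longrightarrow> c \<in> {1..7} \<Longrightarrow>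
   (\<Sum>p=1..7. \<Sum>q=1..7. \<Sum>r=1..7. f p q r * word [a,b,c] [p,q,r]) = (f a b c :: 'k::field)"
proof -
  assume a: "a \<in> {1..7}" "b \<in> {1..7}" "c \<in> {1..7}"
  have "(\<Sum>p=1..7. \<Sum>q=1..7. \<Sum>r=1..7. f p q r * word [a,b,c] [p,q,r]) =
    (\<Sum>p=1..7. \<Sum>q=1..7. \<Sum>r=1..7. ((f p q r * (if p = a then 1 else 0)) * (if q = b then 1 else 0)) * (if r = c then 1 else 0))"
    by (simp only: word3_eval mult.assoc)
  also have "\<dots> = f a b c" using a by (simp only: sum_delta_r finite_atLeastAtMost if_True)
  finally show ?thesis .
qed

lemma thom_nz: "x \<in> thom n \<Longrightarrow> x v \<noteq> 0 \<Longrightarrow> length v = n \<and> set v \<subseteq> {1..7}"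
  by (auto simp: thom_def tens_def)

lemma expand3: assumes "x \<in> thom 3"
  shows "x = (\<lambda>v. \<Sum>r=1..7. \<Sum>s=1..7. \<Sum>i=1..7. x [r,s,i] * word [r,s,i] v)"
proof
  fix v
  show "x v = (\<Sum>r=1..7. \<Sum>s=1..7. \<Sum>i=1..7. x [r,s,i] * word [r,s,i] v)"
  proof (cases "\<exists>a b c. a \<in> {1..7} \<and> b \<in> {1..7} \<and> c \<in> {1..7} \<and> v = [a,b,c]")
    case True
    then obtain a b c where abc: "a \<in> {1..7}" "b \<in> {1..7}" "c \<in> {1..7}" "v = [a,b,c]" by blast
    show ?thesis unfolding abc(4) word_sym[of _ "[a,b,c]"] using sum_word3[OF abc(1-3), of "\<lambda>r s i. x [r,s,i]"] by simp
  next
    case False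
    have "x v = 0"
    proof (rule ccontr)
      assume "x v \<noteq> 0"
      then have "length v = 3" "set v \<subseteq> {1..7}" using thom_nz[OF assms] by auto
      then obtain a b c where "v = [a,b,c]" by (auto simp: length_Suc_conv numeral_3_eq_3)
      then show False using False \<open>set v \<subseteq> {1..7}\<close> by auto
    qed
    moreover have "word [r,s,i] v = (0::'a) " if "r \<in> {1..7}" "s \<in> {1..7}" "i \<in> {1..7}" for r s i
      using False that by (auto simp: word_def)
    ultimately show ?thesis by simp
  qed
qed

lemma expand2: assumes "x \<in> thom 2"
  shows "x = (\<lambda>v. \<Sum>r=1..7. \<Sum>s=1..7. x [r,s] * word [r,s] v)"
proof
  fix v
  show "x v = (\<Sum>r=1..7. \<Sum>s=1..7. x [r,s] * word [r,s] v)"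
  proof (cases "\<exists>a b. a \<in> {1..7} \<and> b \<in> {1..7} \<and> v = [a,b]")
    case True
    then obtain a b where abc: "a \<in> {1..7}" "b \<in> {1..7}" "v = [a,b]" by blast
    show ?thesis unfolding abc(3) word_sym[of _ "[a,b]"] using sum_word2[OF abc(1-2), of "\<lambda>r s. x [r,s]"] by simp
  next
    case False
    have "x v = 0"
    proof (rule ccontr)
      assume "x v \<noteq> 0"
      then have "length v = 2" "set v \<subseteq> {1..7}" using thom_nz[OF assms] by auto
      then obtain a b where "v = [a,b]" by (auto simp: length_Suc_conv numeral_2_eq_2)
      then show False using False \<open>set v \<subseteq> {1..7}\<close> by auto
    qed
    moreover have "word [r,s] v = (0::'a) " if "r \<in> {1..7}" "s \<in> {1..7}" for r s
      using False that by (auto simp: word_def)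
    ultimately show ?thesis by simp
  qed
qed

lemma expand1: assumes "x \<in> thom 1"
  shows "x = (\<lambda>v. \<Sum>r=1..7. x [r] * word [r] v)"
proof
  fix v
  show "x v = (\<Sum>r=1..7. x [r] * word [r] v)"
  proof (cases "\<exists>a. a \<in> {1..7} \<and> v = [a]")
    case True
    then obtain a where abc: "a \<in> {1..7}" "v = [a]" by blast
    show ?thesis unfolding abc(2) word_sym[of _ "[a]"] using sum_word1[OF abc(1), of "\<lambda>r. x [r]"] by simp
  next
    case False
    have "x v = 0"
    proof (rule ccontr)
      assume "x v \<noteq> 0"
      then have "length v = 1" "set v \<subseteq> {1..7}" using thom_nz[OF assms] by auto
      then obtain a where "v = [a]" by (auto simp: length_Suc_conv)
      then show False using False \<open>set v \<subseteq> {1..7}\<close> by auto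
    qed
    moreover have "word [r] v = (0::'a) " if "r \<in> {1..7}" for r
      using False that by (auto simp: word_def)
    ultimately show ?thesis by simp
  qed
qed

lemma Rel_sum: "finite S \<Longrightarrow> (\<And>k. k \<in> S \<Longrightarrow> Rel (F k) (G k)) \<Longrightarrow> Rel (\<lambda>v. \<Sum>k\<in>S. F k v) (\<lambda>v. \<Sum>k\<in>S. G k v)"
  unfolding Rel_def using ideal_sum[of S "\<lambda>k v. F k v - G k v"] by (simp add: sum_subtractf)

lemma Rel_add: "Rel x y \<Longrightarrow> Rel x' y' \<Longrightarrow> Rel (\<lambda>v. x v + x' v) (\<lambda>v. y v + y' v)"
  using Rel_vadd by (simp add: vadd_def)

lemma deg3_rel: assumes "x \<in> thom 3" shows "Rel x (vsc (phi3 x) omega)"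
proof -
  have "Rel (\<lambda>v. \<Sum>r=1..7. \<Sum>s=1..7. \<Sum>i=1..7. x [r,s,i] * word [r,s,i] v)
            (\<lambda>v. \<Sum>r=1..7. \<Sum>s=1..7. \<Sum>i=1..7. x [r,s,i] * (of_int (eps r s i) * omega v))"
  proof (intro Rel_sum finite_atLeastAtMost)
    fix r s i :: nat assume "r \<in> {1..7}" "s \<in> {1..7}" "i \<in> {1..7}"
    then have "Rel (word [r,s,i]) (vsc (of_int (eps r s i)) omega)" using deg3_all by blast
    then have "Rel (vsc (x [r,s,i]) (word [r,s,i])) (vsc (x [r,s,i]) (vsc (of_int (eps r s i)) omega))" by (rule Rel_vsc)
    then show "Rel (\<lambda>v. x [r,s,i] * word [r,s,i] v) (\<lambda>v. x [r,s,i] * (of_int (eps r s i) * omega v))"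
      by (simp add: vsc_def)
  qed
  moreover have "(\<lambda>v. \<Sum>r=1..7. \<Sum>s=1..7. \<Sum>i=1..7. x [r,s,i] * (of_int (eps r s i) * omega v)) = vsc (phi3 x) omega"
    by (simp add: vsc_def phi3_def sum_distrib_right sum_distrib_left mult_ac fun_eq_iff)
  ultimately show ?thesis using expand3[OF assms] by simp
qed

lemma phi2_diff: "phi2 (\<lambda>w. x w - y w) = (\<lambda>j. phi2 x j - phi2 y j)"
  by (simp add: phi2_def fun_eq_iff right_diff_distrib sum_subtractf)

lemma phi2_comb: assumes "\<And>j. j \<notin> {1..7} \<Longrightarrow> u j = 0"
  shows "phi2 (\<lambda>w. \<Sum>i=1..7. u i * word (qw i) w) = u"
proof
  fix j
  show "phi2 (\<lambda>w. \<Sum>i=1..7. u i * word (qw i) w) j = u j"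
  proof (cases "j \<in> {1..7}")
    case True
    have "phi2 (\<lambda>w. \<Sum>i=1..7. u i * word (qw i) w) j =
        (\<Sum>r=1..7. \<Sum>s=1..7. \<Sum>i=1..7. of_int (eps r s j) * (u i * word [qa i, qb i] [r,s]))"
      using True by (simp add: phi2_def qw_eq sum_distrib_left)
    also have "\<dots> = (\<Sum>i=1..7. u i * (\<Sum>r=1..7. \<Sum>s=1..7. of_int (eps r s j) * word [qa i, qb i] [r,s]))"
      by (subst sum3_rot) (simp add: sum_distrib_left mult.left_commute)
    also have "\<dots> = (\<Sum>i=1..7. u i * of_int (eps (qa i) (qb i) j))"
      by (intro sum.cong refl) (simp only: sum_word2[OF qab_range])
    also have "\<dots> = (\<Sum>i=1..7. u i * (if i = j then 1 else 0))"
    proof (intro sum.cong refl)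
      fix i :: nat assume "i \<in> {1..7}"
      then show "u i * of_int (eps (qa i) (qb i) j) = u i * (if i = j then 1 else 0)"
        using eps_q[OF _ True, of i] eps_cyc[of j "qa i" "qb i"] by simp
    qed
    also have "\<dots> = u j" using True by (simp only: sum_delta_r finite_atLeastAtMost if_True)
    finally show ?thesis .
  qed (auto simp: phi2_def assms)
qed

lemma comb2_thom: "(\<lambda>w. \<Sum>i=1..7. u i * word (qw i) w) \<in> thom 2"
proof (intro thom_sum finite_atLeastAtMost)
  fix i
  have "word (qw i) \<in> thom 2" using qab_range[of i] by (intro thom_word) (auto simp: qw_eq)
  then have "vsc (u i) (word (qw i)) \<in> thom 2" by (rule thom_vsc)
  then show "(\<lambda>w. u i * word (qw i) w) \<in> thom 2" by (simp add: vsc_def)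
qed

lemma phi2_range: "j \<notin> {1..7} \<Longrightarrow> phi2 x j = 0" by (auto simp: phi2_def)

lemma deg2_rel: assumes "x \<in> thom 2" shows "Rel x (\<lambda>v. \<Sum>i=1..7. phi2 x i * word (qw i) v)"
proof -
  let ?c = "\<lambda>v. \<Sum>i=1..7. phi2 x i * word (qw i) v"
  have "(\<lambda>v. x v - ?c v) \<in> thom 2" using assms comb2_thom by (rule thom_diff)
  moreover have "phi2 (\<lambda>v. x v - ?c v) = (\<lambda>_. 0)"
  proof -
    have "phi2 ?c = phi2 x" by (rule phi2_comb) (rule phi2_range)
    then show ?thesis by (simp add: phi2_diff)
  qed
  ultimately have "(\<lambda>v. x v - ?c v) \<in> Rperp" by (simp add: Rperp_iff)
  then show ?thesis unfolding Rel_def by (rule Rperp_ideal)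
qed



lemma deg3_rel_word: "a \<in> {1..7} \<Longrightarrow> b \<in> {1..7} \<Longrightarrow> c \<in> {1..7} \<Longrightarrow>
  Rel (word [a,b,c]) (vsc (of_int (eps a b c)) omega :: nat list \<Rightarrow> 'k::field)"
  using deg3_all by blast

lemma word11_ideal: "word [1,1] \<in> (dual_ideal :: (nat list \<Rightarrow> 'k::field) set)"
proof -
  have "Rel (word [1,1]) (vsc (of_int 0) (word [1,1]) :: nat list \<Rightarrow> 'k)"
    by (rule RA) (simp_all add: eps_same2)
  then show ?thesis by (simp add: vsc_def Rel_zero_iff[symmetric])
qed

lemma deg4_word: assumes "a \<in> {1..7}" "b \<in> {1..7}" "c \<in> {1..7}" "d \<in> {1..7}"
  shows "word [a,b,c,d] \<in> (dual_ideal :: (nat list \<Rightarrow> 'k::field) set)"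
proof -
  have dt: "word [d] \<in> (tens :: (nat list \<Rightarrow> 'k) set)" using assms by (intro word_tens) auto
  have one: "word [1] \<in> (tens :: (nat list \<Rightarrow> 'k) set)" by (intro word_tens) auto
  have "Rel (tmul (word [a,b,c]) (word [d])) (tmul (vsc (of_int (eps a b c)) omega) (word [d]) :: nat list \<Rightarrow> 'k)"
    using deg3_rel_word[OF assms(1-3)] dt by (rule Rel_rmul)
  then have r1: "Rel (word [a,b,c,d]) (vsc (of_int (eps a b c)) (word [1,2,3,d]) :: nat list \<Rightarrow> 'k)"
    by (simp add: tmul_vsc1 tmul_word omega_def)
  have "Rel (tmul (word [1]) (word [2,3,d])) (tmul (word [1]) (vsc (of_int (eps 2 3 d)) omega) :: nat list \<Rightarrow> 'k)"
    using deg3_rel_word[of 2 3 d] assms one by (intro Rel_lmul) auto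
  then have r2: "Rel (word [1,2,3,d]) (vsc (of_int (eps 2 3 d)) (word [1,1,2,3]) :: nat list \<Rightarrow> 'k)"
    by (simp add: tmul_vsc2 tmul_word omega_def)
  have "tmul (word [1,1]) (word [2,3]) \<in> (dual_ideal :: (nat list \<Rightarrow> 'k) set)"
    using word11_ideal by (rule ideal_rmul) (intro word_tens, auto)
  then have "word [1,1,2,3] \<in> (dual_ideal :: (nat list \<Rightarrow> 'k) set)" by (simp add: tmul_word)
  then have "vsc (of_int (eps 2 3 d)) (word [1,1,2,3]) \<in> (dual_ideal :: (nat list \<Rightarrow> 'k) set)"
    by (rule dual_ideal.scale)
  then have "word [1,2,3,d] \<in> (dual_ideal :: (nat list \<Rightarrow> 'k) set)" using r2 Rel_ideal by blast
  then have "vsc (of_int (eps a b c)) (word [1,2,3,d]) \<in> (dual_ideal :: (nat list \<Rightarrow> 'k) set)"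
    by (rule dual_ideal.scale)
  then show ?thesis using r1 Rel_ideal by blast
qed

lemma long_word: assumes "4 \<le> length w" "set w \<subseteq> {1..7}"
  shows "word w \<in> (dual_ideal :: (nat list \<Rightarrow> 'k::field) set)"
proof -
  have "length (take 4 w) = 4" using assms(1) by simp
  moreover have "\<And>xs::nat list. length xs = Suc (Suc (Suc (Suc 0))) \<Longrightarrow> \<exists>a b c d. xs = [a,b,c,d]"
    by (auto simp: length_Suc_conv)
  moreover have "(4::nat) = Suc (Suc (Suc (Suc 0)))" by simp
  ultimately obtain a b c d where t: "take 4 w = [a,b,c,d]" by force
  define u where "u = drop 4 w"
  have w: "w = [a,b,c,d] @ u" unfolding u_def t[symmetric] by simp
  then have "word [a,b,c,d] \<in> (dual_ideal :: (nat list \<Rightarrow> 'k) set)" using assms(2) by (intro deg4_word) auto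
  then have "tmul (word [a,b,c,d]) (word u) \<in> (dual_ideal :: (nat list \<Rightarrow> 'k) set)"
    using assms(2) w by (intro ideal_rmul word_tens) auto
  then show ?thesis using w by (simp add: tmul_word)
qed



definition comb :: "(nat list \<Rightarrow> 'k::field) \<Rightarrow> nat list \<Rightarrow> 'k" where
  "comb x = (\<lambda>w. x [] * word [] w + (\<Sum>i=1..7. x [i] * word [i] w + phi2 x i * word (qw i) w) + phi3 x * omega w)"

definition pj :: "nat \<Rightarrow> (nat list \<Rightarrow> 'k::field) \<Rightarrow> nat list \<Rightarrow> 'k" where
  "pj n x = (\<lambda>v. if length v = n then x v else 0)"

definition prest :: "(nat list \<Rightarrow> 'k::field) \<Rightarrow> nat list \<Rightarrow> 'k" where
  "prest x = (\<lambda>v. if 4 \<le> length v then x v else 0)"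

lemma pj_thom: assumes "x \<in> tens" shows "pj n x \<in> thom n"
proof -
  have "{w. pj n x w \<noteq> 0} \<subseteq> {w. x w \<noteq> 0}" by (auto simp: pj_def)
  then have "finite {w. pj n x w \<noteq> 0}" using assms by (auto simp: tens_def intro: finite_subset)
  then show ?thesis using assms by (auto simp: thom_def tens_def pj_def split: if_splits)
qed

lemma expandS: assumes "finite S" "\<And>w. f w \<noteq> 0 \<Longrightarrow> w \<in> S"
  shows "f = (\<lambda>v. \<Sum>w\<in>S. f w * word w v)"
proof
  fix v
  have "(\<Sum>w\<in>S. f w * word w v) = (\<Sum>w\<in>S. f w * (if w = v then 1 else 0))"
    by (simp add: word_def eq_commute)
  also have "\<dots> = (if v \<in> S then f v else 0)" using assms(1) by (rule sum_delta_r)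
  also have "\<dots> = f v" using assms(2) by auto
  finally show "f v = (\<Sum>w\<in>S. f w * word w v)" by simp
qed

lemma prest_ideal: assumes "x \<in> tens" shows "prest x \<in> dual_ideal"
proof -
  let ?S = "{w. x w \<noteq> 0}"
  have fin: "finite ?S" using assms by (simp add: tens_def)
  have e: "prest x = (\<lambda>v. \<Sum>w\<in>?S. prest x w * word w v)"
    by (rule expandS[OF fin]) (auto simp: prest_def split: if_splits)
  have "(\<lambda>v. \<Sum>w\<in>?S. prest x w * word w v) \<in> dual_ideal"
  proof (rule ideal_sum[OF fin])
    fix w assume w: "w \<in> ?S"
    show "(\<lambda>v. prest x w * word w v) \<in> dual_ideal"
    proof (cases "4 \<le> length w")
      case True
      have "set w \<subseteq> {1..7}" using w assms by (auto simp: tens_def)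
      then have "word w \<in> dual_ideal" using True by (intro long_word) auto
      then have "vsc (prest x w) (word w) \<in> dual_ideal" by (rule dual_ideal.scale)
      then show ?thesis by (simp add: vsc_def)
    next
      case False
      then show ?thesis by (simp add: prest_def dual_ideal.zero)
    qed
  qed
  then show ?thesis using e by simp
qed

lemma decomp: "x = (\<lambda>v. pj 0 x v + pj 1 x v + pj 2 x v + pj 3 x v + prest x v)"
proof
  fix v :: "nat list"
  consider "length v = 0" | "length v = 1" | "length v = 2" | "length v = 3" | "4 \<le> length v" by linarith
  then show "x v = pj 0 x v + pj 1 x v + pj 2 x v + pj 3 x v + prest x v"
    by cases (auto simp: pj_def prest_def)
qed

lemma pj0: "pj 0 x = (\<lambda>v. x [] * word [] v)"
  by (auto simp: pj_def word_def fun_eq_iff)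

lemma phi2_pj2: "phi2 (pj 2 x) = phi2 x" by (simp add: phi2_def pj_def cong: if_cong)
lemma phi3_pj3: "phi3 (pj 3 x) = phi3 x" by (simp add: phi3_def pj_def numeral_3_eq_3)

lemma reduce: assumes "x \<in> tens" shows "Rel x (comb x)"
proof -
  have r0: "Rel (pj 0 x) (\<lambda>v. x [] * word [] v)" unfolding pj0 by (rule Rel_refl)
  have r1: "Rel (pj 1 x) (\<lambda>v. \<Sum>r=1..7. x [r] * word [r] v)"
  proof -
    have "pj 1 x = (\<lambda>v. \<Sum>r=1..7. pj 1 x [r] * word [r] v)" using pj_thom[OF assms] by (rule expand1)
    then show ?thesis by (simp add: pj_def Rel_refl)
  qed
  have r2: "Rel (pj 2 x) (\<lambda>v. \<Sum>i=1..7. phi2 x i * word (qw i) v)"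
    using deg2_rel[OF pj_thom[OF assms]] by (simp add: phi2_pj2)
  have r3: "Rel (pj 3 x) (\<lambda>v. phi3 x * omega v)"
    using deg3_rel[OF pj_thom[OF assms]] by (simp add: phi3_pj3 vsc_def)
  have r4: "Rel (prest x) (\<lambda>_. 0)" using prest_ideal[OF assms] by (simp add: Rel_zero_iff)
  have "Rel (\<lambda>v. pj 0 x v + pj 1 x v + pj 2 x v + pj 3 x v + prest x v)
     (\<lambda>v. x [] * word [] v + (\<Sum>r=1..7. x [r] * word [r] v) + (\<Sum>i=1..7. phi2 x i * word (qw i) v) + phi3 x * omega v + 0)"
    by (intro Rel_add r0 r1 r2 r3 r4)
  moreover have "(\<lambda>v. x [] * word [] v + (\<Sum>r=1..7. x [r] * word [r] v) + (\<Sum>i=1..7. phi2 x i * word (qw i) v) + phi3 x * omega v + 0) = comb x"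
    by (simp add: comb_def sum.distrib add.assoc)
  ultimately show ?thesis using decomp[of x] by simp
qed



lemma word_len_ne: "length u \<noteq> length v \<Longrightarrow> word u v = 0"
  by (auto simp: word_def)

lemma tens_sum: "finite S \<Longrightarrow> (\<And>k. k \<in> S \<Longrightarrow> F k \<in> tens) \<Longrightarrow> (\<lambda>w. \<Sum>k\<in>S. F k w) \<in> tens"
proof (induction S rule: finite_induct)
  case empty then show ?case by (simp add: zero_tens)
next
  case (insert k S)
  then have "vadd (F k) (\<lambda>v. \<Sum>k\<in>S. F k v) \<in> tens" by (intro vadd_tens) auto
  then show ?case using insert by (simp add: vadd_def)
qed

lemma tmul_sum1: "finite S \<Longrightarrow> tmul (\<lambda>w. \<Sum>k\<in>S. F k w) g = (\<lambda>w. \<Sum>k\<in>S. tmul (F k) g w)"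
proof (induction S rule: finite_induct)
  case empty then show ?case by (simp add: tmul_zero1)
next
  case (insert k S)
  have "tmul (\<lambda>w. \<Sum>k\<in>insert k S. F k w) g = tmul (vadd (F k) (\<lambda>w. \<Sum>k\<in>S. F k w)) g"
    using insert by (simp add: vadd_def)
  also have "\<dots> = vadd (tmul (F k) g) (\<lambda>w. \<Sum>k\<in>S. tmul (F k) g w)" by (simp add: tmul_vadd1 insert.IH)
  finally show ?case using insert by (simp add: vadd_def)
qed

lemma phi3_sum: "finite S \<Longrightarrow> phi3 (\<lambda>w. \<Sum>k\<in>S. F k w) = (\<Sum>k\<in>S. phi3 (F k))"
proof (induction S rule: finite_induct)
  case empty then show ?case by (simp add: phi3_zero)
next
  case (insert k S)
  have "phi3 (\<lambda>w. \<Sum>k\<in>insert k S. F k w) = phi3 (vadd (F k) (\<lambda>w. \<Sum>k\<in>S. F k w))"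
    using insert by (simp add: vadd_def)
  then show ?case using insert by (simp add: phi3_vadd)
qed

lemma phi3_add: "phi3 (\<lambda>w. F w + G w) = phi3 F + phi3 G"
  using phi3_vadd[of F G] by (simp add: vadd_def)
lemma phi3_scale: "phi3 (\<lambda>w. c * F w) = c * phi3 F"
  using phi3_vsc[of c F] by (simp add: vsc_def)
lemma tmul_add1: "tmul (\<lambda>w. F w + G w) g = (\<lambda>w. tmul F g w + tmul G g w)"
  using tmul_vadd1[of F G g] by (simp add: vadd_def)
lemma tmul_scale1: "tmul (\<lambda>w. c * F w) g = (\<lambda>w. c * tmul F g w)"
  using tmul_vsc1[of c F g] by (simp add: vsc_def)

lemma pw0: "phi3 (tmul (word []) t) = phi3 t" by (simp add: tmul_one1)

lemma pw1: assumes "i \<in> {1..7}" shows "phi3 (tmul (word [i]) t) = phi2 t i"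
proof -
  have "phi3 (tmul (word [i]) t) = (\<Sum>r=1..7. \<Sum>s=1..7. \<Sum>k=1..7. of_int (eps r s k) * (word [i] [r] * t [s,k]))"
    by (simp add: phi3_tmul word_len_ne)
  also have "\<dots> = (\<Sum>r=1..7. (\<Sum>s=1..7. \<Sum>k=1..7. of_int (eps r s k) * t [s,k]) * word [i] [r])"
    by (simp add: sum_distrib_right sum_distrib_left mult_ac)
  also have "\<dots> = (\<Sum>s=1..7. \<Sum>k=1..7. of_int (eps i s k) * t [s,k])"
    using assms by (rule sum_word1)
  also have "\<dots> = phi2 t i" using assms by (simp add: phi2_def eps_cyc[of i])
  finally show ?thesis .
qed

lemma pw2: assumes "i \<in> {1..7}" shows "phi3 (tmul (word (qw i)) t) = t [i]"
proof -
  have "phi3 (tmul (word (qw i)) t) = (\<Sum>r=1..7. \<Sum>s=1..7. \<Sum>k=1..7. of_int (eps r s k) * (word [qa i, qb i] [r,s] * t [k]))"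
    by (simp add: phi3_tmul word_len_ne qw_eq)
  also have "\<dots> = (\<Sum>k=1..7. (\<Sum>r=1..7. \<Sum>s=1..7. of_int (eps r s k) * word [qa i, qb i] [r,s]) * t [k])"
    by (subst sum3_rot) (simp add: sum_distrib_right sum_distrib_left mult_ac)
  also have "\<dots> = (\<Sum>k=1..7. t [k] * (if k = i then 1 else 0))"
  proof (intro sum.cong refl)
    fix k :: nat assume k: "k \<in> {1..7}"
    have "(\<Sum>r=1..7. \<Sum>s=1..7. of_int (eps r s k) * word [qa i, qb i] [r,s]) = (of_int (eps (qa i) (qb i) k) :: 'a)"
      by (simp only: sum_word2[OF qab_range])
    also have "\<dots> = (if k = i then 1 else 0)" using eps_q[OF assms k] eps_cyc[of k "qa i" "qb i"] by auto
    finally show "(\<Sum>r=1..7. \<Sum>s=1..7. of_int (eps r s k) * word [qa i, qb i] [r,s]) * t [k] = t [k] * (if k = i then 1 else (0::'a))"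
      by simp
  qed
  also have "\<dots> = t [i]" using assms by (simp only: sum_delta_r finite_atLeastAtMost if_True)
  finally show ?thesis .
qed

lemma pw3: "phi3 (tmul omega t) = t []"
proof -
  have "phi3 (tmul omega t) = (\<Sum>r=1..7. \<Sum>s=1..7. \<Sum>k=1..7. (of_int (eps r s k) * t []) * word [1,2,3] [r,s,k])"
    by (simp add: phi3_tmul word_len_ne omega_def mult_ac)
  also have "\<dots> = of_int (eps 1 2 3) * t []" by (rule sum_word3) auto
  also have "\<dots> = t []" by (simp add: eps_simps)
  finally show ?thesis .
qed

lemma phi3_omega: "phi3 omega = 1"
  using pw3[of "word []"] unfolding tmul_one2 by (simp add: word_def)

definition Phi :: "(nat list \<Rightarrow> 'k::field) \<Rightarrow> (nat list \<Rightarrow> 'k) \<Rightarrow> 'k" where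
  "Phi x = (\<lambda>t. if t \<in> tens then phi3 (tmul x t) else 0)"

lemma lsf_add: "lin_on_scalar tens f \<Longrightarrow> a \<in> tens \<Longrightarrow> b \<in> tens \<Longrightarrow> f (\<lambda>w. a w + b w) = f a + f b"
  unfolding lin_on_scalar_def vadd_def by blast
lemma lsf_scale: "lin_on_scalar tens f \<Longrightarrow> a \<in> tens \<Longrightarrow> f (\<lambda>w. c * a w) = c * f a"
  unfolding lin_on_scalar_def vsc_def by blast
lemma lsf_zero: "lin_on_scalar tens f \<Longrightarrow> f (\<lambda>_. 0) = 0"
  using lsf_scale[of f "\<lambda>_. 0" 0] zero_tens by simp
lemma lsf_sum: "finite S \<Longrightarrow> lin_on_scalar tens f \<Longrightarrow> (\<And>k. k \<in> S \<Longrightarrow> F k \<in> tens) \<Longrightarrow>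
   f (\<lambda>w. \<Sum>k\<in>S. F k w) = (\<Sum>k\<in>S. f (F k))"
proof (induction S rule: finite_induct)
  case empty then show ?case by (simp add: lsf_zero)
next
  case (insert k S)
  have "f (\<lambda>w. \<Sum>k\<in>insert k S. F k w) = f (\<lambda>w. F k w + (\<Sum>k\<in>S. F k w))" using insert by simp
  also have "\<dots> = f (F k) + f (\<lambda>w. \<Sum>k\<in>S. F k w)"
    using insert by (intro lsf_add tens_sum) auto
  finally show ?case using insert by simp
qed

lemma omega_tens: "omega \<in> tens" unfolding omega_def by (rule word_tens) auto
lemma w1_tens: "i \<in> {1..7} \<Longrightarrow> word [i] \<in> tens" by (rule word_tens) auto
lemma wq_tens: "word (qw i) \<in> tens" using qab_range[of i] by (intro word_tens) (auto simp: qw_eq)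

lemma scale_tens: "a \<in> tens \<Longrightarrow> (\<lambda>w. c * a w) \<in> tens"
  using vsc_tens[of a c] by (simp add: vsc_def)
lemma add_tens: "a \<in> tens \<Longrightarrow> b \<in> tens \<Longrightarrow> (\<lambda>w. a w + b w) \<in> tens"
  using vadd_tens[of a b] by (simp add: vadd_def)

lemma comb_tens: "comb x \<in> tens"
  unfolding comb_def
  by (intro add_tens scale_tens tens_sum finite_atLeastAtMost one_tens omega_tens w1_tens wq_tens) auto

lemma f_comb: assumes "lin_on_scalar tens f"
  shows "f (comb t) = t [] * f (word []) + (\<Sum>i=1..7. t [i] * f (word [i]) + phi2 t i * f (word (qw i))) + phi3 t * f omega"
proof -
  have A: "\<And>i. i \<in> {1..7} \<Longrightarrow> (\<lambda>w. t [i] * word [i] w + phi2 t i * word (qw i) w) \<in> tens"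
    by (intro add_tens scale_tens w1_tens wq_tens) auto
  have B: "(\<lambda>w. \<Sum>i=1..7. t [i] * word [i] w + phi2 t i * word (qw i) w) \<in> tens"
    by (intro tens_sum A) auto
  have "f (comb t) = f (\<lambda>w. t [] * word [] w + (\<Sum>i=1..7. t [i] * word [i] w + phi2 t i * word (qw i) w)) + f (\<lambda>w. phi3 t * omega w)"
    unfolding comb_def by (intro lsf_add[OF assms] add_tens scale_tens B one_tens omega_tens)
  also have "\<dots> = t [] * f (word []) + (\<Sum>i=1..7. f (\<lambda>w. t [i] * word [i] w + phi2 t i * word (qw i) w)) + phi3 t * f omega"
  proof -
    have "f (\<lambda>w. t [] * word [] w + (\<Sum>i=1..7. t [i] * word [i] w + phi2 t i * word (qw i) w)) =
      f (\<lambda>w. t [] * word [] w) + f (\<lambda>w. \<Sum>i=1..7. t [i] * word [i] w + phi2 t i * word (qw i) w)"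
      by (rule lsf_add[OF assms]) (intro scale_tens one_tens, rule B)
    moreover have "f (\<lambda>w. t [] * word [] w) = t [] * f (word [])" by (rule lsf_scale[OF assms one_tens])
    moreover have "f (\<lambda>w. \<Sum>i=1..7. t [i] * word [i] w + phi2 t i * word (qw i) w) = (\<Sum>i=1..7. f (\<lambda>w. t [i] * word [i] w + phi2 t i * word (qw i) w))"
      by (rule lsf_sum[OF _ assms A]) auto
    moreover have "f (\<lambda>w. phi3 t * omega w) = phi3 t * f omega" by (rule lsf_scale[OF assms omega_tens])
    ultimately show ?thesis by simp
  qed
  also have "(\<Sum>i=1..7. f (\<lambda>w. t [i] * word [i] w + phi2 t i * word (qw i) w)) = (\<Sum>i=1..7. t [i] * f (word [i]) + phi2 t i * f (word (qw i)))"
    by (intro sum.cong refl) (simp add: lsf_add[OF assms] scale_tens w1_tens wq_tens lsf_scale[OF assms])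
  finally show ?thesis .
qed



definition Kset :: "nat list set" where
  "Kset = insert [] ((\<lambda>i. [i]) ` {1..7} \<union> qw ` {1..7} \<union> {[1,2,3]})"

definition cf :: "(nat list \<Rightarrow> 'k::field) \<Rightarrow> (nat list \<Rightarrow> 'k) \<Rightarrow> 'k" where
  "cf x b = b [] * x [] + (\<Sum>i=1..7. b [i] * x [i] + b (qw i) * phi2 x i) + b [1,2,3] * phi3 x"

lemma Kset_finite: "finite Kset" by (simp add: Kset_def)

lemma Kset_tens: "u \<in> Kset \<Longrightarrow> word u \<in> tens"
proof -
  have b: "Suc 0 \<le> qa i" "qa i \<le> 7" "Suc 0 \<le> qb i" "qb i \<le> 7" for i using qab_range[of i] by auto
  assume "u \<in> Kset" then show ?thesis unfolding Kset_def by (auto intro!: word_tens simp: qw_eq b)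
qed

lemma cf_word: "cf x (word w) = comb x w"
  by (simp add: cf_def comb_def word_sym[of w] omega_def mult.commute)

lemma comb_out: assumes "w \<notin> Kset" shows "comb x w = 0"
proof -
  have "w \<noteq> []" "w \<noteq> [1,2,3]" "\<And>i. i \<in> {1..7} \<Longrightarrow> w \<noteq> [i]" "\<And>i. i \<in> {1..7} \<Longrightarrow> w \<noteq> qw i"
    using assms by (auto simp: Kset_def)
  then have "(\<Sum>i=1..7. x [i] * word [i] w + phi2 x i * word (qw i) w) = 0"
    by (intro sum.neutral) (auto simp: word_def)
  then show ?thesis using \<open>w \<noteq> []\<close> \<open>w \<noteq> [1,2,3]\<close> by (simp add: comb_def word_def omega_def)
qed

lemma basis_sum: "(\<lambda>w. \<Sum>b\<in>word ` Kset. cf x b * b w) = comb x"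
proof
  fix w
  have inj: "inj_on (word :: nat list \<Rightarrow> nat list \<Rightarrow> 'a) Kset" by (auto intro: inj_onI word_inj)
  have "(\<Sum>b\<in>word ` Kset. cf x b * b w) = (\<Sum>u\<in>Kset. cf x (word u) * word u w)"
    by (simp add: sum.reindex[OF inj])
  also have "\<dots> = (\<Sum>u\<in>Kset. cf x (word u) * (if u = w then 1 else 0))"
    by (simp add: word_def eq_commute)
  also have "\<dots> = (if w \<in> Kset then cf x (word w) else 0)" by (rule sum_delta_r[OF Kset_finite])
  also have "\<dots> = comb x w" by (simp add: cf_word comb_out)
  finally show "(\<Sum>b\<in>word ` Kset. cf x b * b w) = comb x w" .
qed

lemma part_basis: "\<exists>B :: (nat list \<Rightarrow> 'k::field) set. finite B \<and> B \<subseteq> tens \<and>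
        (\<forall>x\<in>tens. \<exists>c. vadd x (vsc (-1) (\<lambda>w. \<Sum>b\<in>B. c b * b w)) \<in> dual_ideal)"
proof -
  have "finite (word ` Kset :: (nat list \<Rightarrow> 'k) set)" using Kset_finite by simp
  moreover have "(word ` Kset :: (nat list \<Rightarrow> 'k) set) \<subseteq> tens" using Kset_tens by auto
  moreover have "\<forall>x\<in>tens. \<exists>c. vadd x (vsc (-1) (\<lambda>w. \<Sum>b\<in>word ` Kset. c b * b w)) \<in> (dual_ideal :: (nat list \<Rightarrow> 'k) set)"
  proof
    fix x :: "nat list \<Rightarrow> 'k" assume "x \<in> tens"
    then have "Rel x (comb x)" by (rule reduce)
    then have "vadd x (vsc (-1) (\<lambda>w. \<Sum>b\<in>word ` Kset. cf x b * b w)) \<in> dual_ideal"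
      unfolding basis_sum by (simp add: Rel_def vadd_def vsc_def)
    then show "\<exists>c. vadd x (vsc (-1) (\<lambda>w. \<Sum>b\<in>word ` Kset. c b * b w)) \<in> dual_ideal" by blast
  qed
  ultimately show ?thesis by blast
qed

lemma Phi_add_pt: "Phi (vadd x y) t = Phi x t + Phi y t"
  by (simp add: Phi_def tmul_vadd1 phi3_vadd)
lemma Phi_sc_pt: "Phi (vsc c x) t = c * Phi x t"
  by (simp add: Phi_def tmul_vsc1 phi3_vsc)

lemma Phi_lin: "lin_on tens Phi"
  unfolding lin_on_def
  by (simp add: fun_eq_iff Phi_add_pt Phi_sc_pt) (simp add: vadd_def vsc_def Phi_add_pt Phi_sc_pt)

lemma Phi_in: assumes "x \<in> tens" shows "Phi x \<in> dual_space"
proof -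
  have "lin_on_scalar tens (Phi x)"
    unfolding lin_on_scalar_def Phi_def
    by (auto simp: vadd_tens vsc_tens tmul_vadd2 tmul_vsc2 phi3_vadd phi3_vsc)
  moreover have "Phi x t = 0" if "t \<in> dual_ideal" for t
    using that ideal_tens[OF that] ideal_lmul[OF that assms] phi3_ideal by (simp add: Phi_def)
  ultimately show ?thesis by (simp add: dual_space_def Phi_def)
qed

definition xf :: "((nat list \<Rightarrow> 'k::field) \<Rightarrow> 'k) \<Rightarrow> nat list \<Rightarrow> 'k" where
  "xf f = (\<lambda>w. f (word []) * omega w + (\<Sum>i=1..7. f (word [i]) * word (qw i) w + f (word (qw i)) * word [i] w) + f omega * word [] w)"

lemma xf_tens: "xf f \<in> tens"
  unfolding xf_def
  by (intro add_tens scale_tens tens_sum finite_atLeastAtMost one_tens omega_tens w1_tens wq_tens) auto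

lemma f_eq_comb: assumes "f \<in> dual_space" "t \<in> tens" shows "f t = f (comb t)"
proof -
  have lin: "lin_on_scalar tens f" using assms by (simp add: dual_space_def)
  have d: "(\<lambda>w. t w - comb t w) \<in> dual_ideal" using reduce[OF assms(2)] by (simp add: Rel_def)
  have "f t = f (\<lambda>w. (t w - comb t w) + comb t w)" by simp
  also have "\<dots> = f (\<lambda>w. t w - comb t w) + f (comb t)"
    by (rule lsf_add[OF lin ideal_tens[OF d] comb_tens])
  also have "f (\<lambda>w. t w - comb t w) = 0" using assms(1) d by (simp add: dual_space_def)
  finally show ?thesis by simp
qed

lemma Phi_xf: assumes "f \<in> dual_space" shows "Phi (xf f) = f"
proof
  fix t
  show "Phi (xf f) t = f t"
  proof (cases "t \<in> tens")
    case False then show ?thesis using assms by (simp add: Phi_def dual_space_def)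
  next
    case True
    have lin: "lin_on_scalar tens f" using assms by (simp add: dual_space_def)
    have "phi3 (tmul (xf f) t) = f (word []) * phi3 (tmul omega t) + (\<Sum>i=1..7. f (word [i]) * phi3 (tmul (word (qw i)) t) + f (word (qw i)) * phi3 (tmul (word [i]) t)) + f omega * phi3 (tmul (word []) t)"
      by (simp add: xf_def tmul_add1 tmul_scale1 tmul_sum1 phi3_add phi3_scale phi3_sum)
    also have "\<dots> = f (word []) * t [] + (\<Sum>i=1..7. f (word [i]) * t [i] + f (word (qw i)) * phi2 t i) + f omega * phi3 t"
      by (simp add: pw3 pw0) (intro sum.cong refl; simp add: pw1 pw2)
    also have "\<dots> = f (comb t)" by (simp add: f_comb[OF lin] mult.commute)
    also have "\<dots> = f t" using f_eq_comb[OF assms True] by simp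
    finally show ?thesis using True by (simp add: Phi_def)
  qed
qed

lemma Phi_image: "Phi ` tens = dual_space"
proof
  show "Phi ` tens \<subseteq> dual_space" using Phi_in by auto
  show "dual_space \<subseteq> Phi ` tens"
  proof
    fix f assume "f \<in> dual_space"
    then have "Phi (xf f) = f" by (rule Phi_xf)
    then show "f \<in> Phi ` tens" using xf_tens by (metis image_eqI)
  qed
qed

lemma Phi_kernel: assumes "x \<in> tens" shows "Phi x = (\<lambda>_. 0) \<longleftrightarrow> x \<in> dual_ideal"
proof
  assume "x \<in> dual_ideal"
  then show "Phi x = (\<lambda>_. 0)"
    using ideal_rmul phi3_ideal by (auto simp: Phi_def fun_eq_iff)
next
  assume z: "Phi x = (\<lambda>_. 0)"
  have t: "\<And>t. t \<in> tens \<Longrightarrow> phi3 (tmul t x) = 0"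
    using z phi3_trace by (metis Phi_def)
  have c0: "x [] = 0" using t[OF omega_tens] by (simp add: pw3)
  have c1: "x [i] = 0" if "i \<in> {1..7}" for i using t[OF wq_tens[of i]] by (simp add: pw2[OF that])
  have c2: "phi2 x i = 0" if "i \<in> {1..7}" for i using t[OF w1_tens[OF that]] by (simp add: pw1[OF that])
  have c3: "phi3 x = 0" using t[OF one_tens] by (simp add: pw0)
  have "comb x = (\<lambda>_. 0)"
    unfolding comb_def fun_eq_iff using c0 c1 c2 c3 by (auto intro!: sum.neutral)
  then show "x \<in> dual_ideal" using reduce[OF assms] by (simp add: Rel_zero_iff)
qed

lemma Phi_bimod: assumes "a \<in> tens" "x \<in> tens" "b \<in> tens"
  shows "Phi (tmul (tmul a x) b) = dual_act a (Phi x) b"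
proof
  fix t
  show "Phi (tmul (tmul a x) b) t = dual_act a (Phi x) b t"
  proof (cases "t \<in> tens")
    case False then show ?thesis by (simp add: Phi_def dual_act_def)
  next
    case True
    have bt: "tmul (tmul b t) a \<in> tens" using assms True by (intro tmul_tens) auto
    have "phi3 (tmul (tmul (tmul a x) b) t) = phi3 (tmul a (tmul x (tmul b t)))"
      by (simp add: tmul_assoc)
    also have "\<dots> = phi3 (tmul (tmul x (tmul b t)) a)" by (rule phi3_trace)
    also have "\<dots> = phi3 (tmul x (tmul (tmul b t) a))" by (simp add: tmul_assoc)
    finally show ?thesis using True bt by (simp add: Phi_def dual_act_def)
  qed
qed

lemma frob: "symmetric_frobenius_dual TYPE('k::field)"
  unfolding symmetric_frobenius_dual_def
proof (intro conjI)
  show "\<exists>B :: (nat list \<Rightarrow> 'k) set. finite B \<and> B \<subseteq> tens \<and>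
        (\<forall>x\<in>tens. \<exists>c. vadd x (vsc (-1) (\<lambda>w. \<Sum>b\<in>B. c b * b w)) \<in> dual_ideal)" by (rule part_basis)
  show "\<exists>Phi :: (nat list \<Rightarrow> 'k) \<Rightarrow> ((nat list \<Rightarrow> 'k) \<Rightarrow> 'k).
        lin_on tens Phi \<and> Phi ` tens = dual_space \<and>
        (\<forall>x\<in>tens. Phi x = (\<lambda>_. 0) \<longleftrightarrow> x \<in> dual_ideal) \<and>
        (\<forall>a\<in>tens. \<forall>x\<in>tens. \<forall>b\<in>tens. Phi (tmul (tmul a x) b) = dual_act a (Phi x) b)"
    using Phi_lin Phi_image Phi_kernel Phi_bimod by blast
qed



lemma half_twice: "(2::'k::field) \<noteq> 0 \<Longrightarrow> 1/2 * (a + a) = (a::'k)"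
  by (simp add: field_simps)

lemma thom1_vals: assumes "u \<in> thom 1" shows "u [] = 0" "u [r,s] = 0" "u [r,s,i] = 0"
  using assms by (auto simp: thom_def)

lemma tmul11: assumes "u \<in> thom 1" "v \<in> thom 1" shows "tmul u v [r,s] = u [r] * v [s]"
  using thom1_vals[OF assms(1)] thom1_vals[OF assms(2)] by (simp add: tm2)

lemma tmul111: assumes "u \<in> thom 1" "v \<in> thom 1" "w \<in> thom 1"
  shows "tmul (tmul u v) w [r,s,i] = u [r] * v [s] * w [i]"
  using thom1_vals[OF assms(1)] thom1_vals[OF assms(2)] thom1_vals[OF assms(3)]
  by (simp add: tm0 tm1 tm2 tm3)

lemma to_oct_sum: "(\<Sum>r=1..7. F r (to_oct u r)) = (\<Sum>r=1..7. F r (u [r]))"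
  by (intro sum.cong refl) (simp add: to_oct_def)

lemma omult_im: assumes "j \<in> {1..7}"
  shows "omult (to_oct u) (to_oct v) j = (\<Sum>r=1..7. \<Sum>s=1..7. of_int (eps r s j) * u [r] * v [s])"
proof -
  have "omult (to_oct u) (to_oct v) j = (\<Sum>r=1..7. \<Sum>s=1..7. of_int (eps r s j) * to_oct u r * to_oct v s)"
    using assms by (simp add: omult_def to_oct_def)
  also have "\<dots> = (\<Sum>r=1..7. \<Sum>s=1..7. of_int (eps r s j) * u [r] * v [s])"
    by (intro sum.cong refl) (simp add: to_oct_def)
  finally show ?thesis .
qed

lemma part1_mult: assumes "(2::'k::field) \<noteq> 0" "u \<in> thom 1" "v \<in> thom 1"
  shows "phi2 (tmul u v) = oim (omult (to_oct u) (to_oct v :: nat \<Rightarrow> 'k))"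
proof
  fix j
  let ?z = "omult (to_oct u) (to_oct v :: nat \<Rightarrow> 'k)"
  have oimj: "oim ?z j = (if j = 0 then 0 else ?z j)"
    using assms(1) by (simp add: oim_def vsc_def vadd_def oconj_def field_simps)
  show "phi2 (tmul u v) j = oim ?z j"
  proof (cases "j \<in> {1..7}")
    case True
    then show ?thesis unfolding oimj using omult_im[OF True, of u v]
      by (auto simp: phi2_def tmul11[OF assms(2,3)] mult.assoc)
  next
    case False
    have "oim ?z j = 0"
    proof (cases "j = 0")
      case True then show ?thesis unfolding oimj by simp
    next
      case False
      then have "j > 7" using \<open>j \<notin> {1..7}\<close> by auto
      then have "?z j = 0" by (simp add: omult_def)
      then show ?thesis unfolding oimj by simp
    qed
    then show ?thesis using False by (auto simp: phi2_def)
  qed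
qed

lemma part2_mult: assumes "(2::'k::field) \<noteq> 0" "u \<in> thom 1" "v \<in> thom 1" "w \<in> thom 1"
  shows "phi3 (tmul (tmul u v) w) = - ore (omult (omult (to_oct u) (to_oct v)) (to_oct w :: nat \<Rightarrow> 'k))"
proof -
  let ?p = "omult (to_oct u) (to_oct v :: nat \<Rightarrow> 'k)"
  let ?z = "omult ?p (to_oct w)"
  have om0: "\<And>a b. omult a b 0 = a 0 * b 0 - (\<Sum>r=1..7. a r * (b r :: 'k))" by (simp add: omult_def)
  have "ore ?z = ?z 0" using assms(1) by (simp add: ore_def vadd_def oconj_def field_simps)
  also have "\<dots> = - (\<Sum>r=1..7. ?p r * to_oct w r)" by (simp add: om0 to_oct_def)
  also have "\<dots> = - (\<Sum>r=1..7. (\<Sum>m=1..7. \<Sum>n=1..7. of_int (eps m n r) * u [m] * v [n]) * w [r])"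
  proof (intro arg_cong[where f=uminus] sum.cong refl)
    fix r :: nat assume r: "r \<in> {1..7}"
    have "?p r = (\<Sum>m=1..7. \<Sum>n=1..7. of_int (eps m n r) * u [m] * v [n])" by (rule omult_im[OF r])
    moreover have "to_oct w r = w [r]" using r by (simp add: to_oct_def)
    ultimately show "?p r * to_oct w r = (\<Sum>m=1..7. \<Sum>n=1..7. of_int (eps m n r) * u [m] * v [n]) * w [r]" by simp
  qed
  finally have "- ore ?z = (\<Sum>r=1..7. \<Sum>m=1..7. \<Sum>n=1..7. of_int (eps m n r) * (u [m] * v [n] * w [r]))"
    by (simp add: sum_distrib_right sum_distrib_left mult_ac)
  also have "\<dots> = (\<Sum>m=1..7. \<Sum>n=1..7. \<Sum>r=1..7. of_int (eps m n r) * (u [m] * v [n] * w [r]))"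
    by (rule sum3_rot[symmetric])
  also have "\<dots> = phi3 (tmul (tmul u v) w)"
    by (simp add: phi3_def tmul111[OF assms(2-4)])
  finally show ?thesis by simp
qed

lemma part1: assumes "(2::'k::field) \<noteq> 0"
  shows "\<exists>phi2 :: (nat list \<Rightarrow> 'k) \<Rightarrow> (nat \<Rightarrow> 'k).
        lin_on (thom 2) phi2 \<and> phi2 ` thom 2 = im_octs \<and>
        (\<forall>x\<in>thom 2. phi2 x = (\<lambda>_. 0) \<longleftrightarrow> x \<in> dual_ideal) \<and>
        (\<forall>u\<in>thom 1. \<forall>v\<in>thom 1. phi2 (tmul u v) = oim (omult (to_oct u) (to_oct v)))"
proof (intro exI[of _ phi2] conjI ballI)
  show "lin_on (thom 2) (phi2 :: (nat list \<Rightarrow> 'k) \<Rightarrow> _)" by (simp add: lin_on_def phi2_vadd phi2_vsc)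
  show "(phi2 :: (nat list \<Rightarrow> 'k) \<Rightarrow> _) ` thom 2 = im_octs"
  proof
    show "(phi2 :: (nat list \<Rightarrow> 'k) \<Rightarrow> _) ` thom 2 \<subseteq> im_octs"
      by (auto simp: im_octs_def octs_def phi2_range)
    show "im_octs \<subseteq> (phi2 :: (nat list \<Rightarrow> 'k) \<Rightarrow> _) ` thom 2"
    proof
      fix u :: "nat \<Rightarrow> 'k" assume u: "u \<in> im_octs"
      have pc: "phi2 (\<lambda>w. \<Sum>i=1..7. u i * word (qw i) w) = u"
      proof (rule phi2_comb)
        fix j :: nat assume j: "j \<notin> {1..7}"
        show "u j = 0"
        proof (cases "j = 0")
          case True then show ?thesis using u by (simp add: im_octs_def)
        next
          case False then have "j > 7" using j by auto
          then show ?thesis using u by (simp add: im_octs_def octs_def)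
        qed
      qed
      show "u \<in> phi2 ` thom 2" by (rule image_eqI[where f=phi2 and x="\<lambda>w. \<Sum>i=1..7. u i * word (qw i) w", OF pc[symmetric] comb2_thom[of u]])
    qed
  qed
  fix x :: "nat list \<Rightarrow> 'k" assume "x \<in> thom 2"
  then show "phi2 x = (\<lambda>_. 0) \<longleftrightarrow> x \<in> dual_ideal"
  proof -
    assume x: "x \<in> thom 2"
    show ?thesis
    proof
      assume "phi2 x = (\<lambda>_. 0)"
      then have "x \<in> Rperp" using x by (simp add: Rperp_iff)
      then show "x \<in> dual_ideal" by (rule Rperp_ideal)
    qed (rule phi2_ideal)
  qed
next
  fix u v :: "nat list \<Rightarrow> 'k" assume "u \<in> thom 1" "v \<in> thom 1"
  then show "phi2 (tmul u v) = oim (omult (to_oct u) (to_oct v))" by (rule part1_mult[OF assms])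
qed

lemma part2: assumes "(2::'k::field) \<noteq> 0"
  shows "\<exists>phi3 :: (nat list \<Rightarrow> 'k) \<Rightarrow> 'k.
        lin_on_scalar (thom 3) phi3 \<and> phi3 ` thom 3 = UNIV \<and>
        (\<forall>x\<in>thom 3. phi3 x = 0 \<longleftrightarrow> x \<in> dual_ideal) \<and>
        (\<forall>u\<in>thom 1. \<forall>v\<in>thom 1. \<forall>w\<in>thom 1.
           phi3 (tmul (tmul u v) w) = - ore (omult (omult (to_oct u) (to_oct v)) (to_oct w)))"
proof (intro exI[of _ phi3] conjI ballI)
  show "lin_on_scalar (thom 3) (phi3 :: (nat list \<Rightarrow> 'k) \<Rightarrow> _)" by (simp add: lin_on_scalar_def phi3_vadd phi3_vsc)
  show "(phi3 :: (nat list \<Rightarrow> 'k) \<Rightarrow> _) ` thom 3 = UNIV"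
  proof -
    have "y \<in> phi3 ` thom 3" for y :: 'k
    proof -
      have "vsc y omega \<in> thom 3" unfolding omega_def by (intro thom_vsc thom_word) auto
      moreover have "phi3 (vsc y omega) = y" by (simp add: phi3_vsc phi3_omega)
      ultimately show ?thesis by (intro image_eqI[of y phi3 "vsc y omega"]) simp_all
    qed
    then show ?thesis by blast
  qed
  fix x :: "nat list \<Rightarrow> 'k" assume x: "x \<in> thom 3"
  show "phi3 x = 0 \<longleftrightarrow> x \<in> dual_ideal"
  proof
    assume "phi3 x = 0"
    then have "Rel x (\<lambda>_. 0)" using deg3_rel[OF x] by (simp add: vsc_def)
    then show "x \<in> dual_ideal" by (simp add: Rel_zero_iff)
  qed (rule phi3_ideal)
next
  fix u v w :: "nat list \<Rightarrow> 'k" assume "u \<in> thom 1" "v \<in> thom 1" "w \<in> thom 1"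
  then show "phi3 (tmul (tmul u v) w) = - ore (omult (omult (to_oct u) (to_oct v)) (to_oct w))"
    by (rule part2_mult[OF assms])
qed

theorem proposition5p3:
  assumes char: "(2::'k::field) \<noteq> 0"
  shows
    "(\<exists>phi2 :: (nat list \<Rightarrow> 'k) \<Rightarrow> (nat \<Rightarrow> 'k).
        lin_on (thom 2) phi2 \<and> phi2 ` thom 2 = im_octs \<and>
        (\<forall>x\<in>thom 2. phi2 x = (\<lambda>_. 0) \<longleftrightarrow> x \<in> dual_ideal) \<and>
        (\<forall>u\<in>thom 1. \<forall>v\<in>thom 1. phi2 (tmul u v) = oim (omult (to_oct u) (to_oct v))))
   \<and> (\<exists>phi3 :: (nat list \<Rightarrow> 'k) \<Rightarrow> 'k.
        lin_on_scalar (thom 3) phi3 \<and> phi3 ` thom 3 = UNIV \<and>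
        (\<forall>x\<in>thom 3. phi3 x = 0 \<longleftrightarrow> x \<in> dual_ideal) \<and>
        (\<forall>u\<in>thom 1. \<forall>v\<in>thom 1. \<forall>w\<in>thom 1.
           phi3 (tmul (tmul u v) w) = - ore (omult (omult (to_oct u) (to_oct v)) (to_oct w))))
   \<and> symmetric_frobenius_dual TYPE('k)"
  by (intro conjI) (rule part1[OF char], rule part2[OF char], rule frob)


end
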